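(* For every fixed $\omega\in\Omega_0^*\cap\Omega_1^*$ and all real numbers $M,a,b$ with $M>0$ and $1/\alpha<a<b<1$, one has (with the convention $0/0=0$) $$\sup_{(u_1,u_2,v)\in[-M;M]^2\times[a;b]}\left\{\frac{|X(u_1,v,\omega)-X(u_2,v,\omega)|}{|u_1-u_2|^{v-1/\alpha}}\right\}<\infty.$$
   Context: Fix $\alpha\in(1,2)$. Let $Z_\alpha(ds)$ be an independently scattered symmetric $\alpha$-stable random measure on $\mathbb{R}$ with Lebesgue control measure on $(\Omega,\mathcal{F},\mathbb{P})$. For $x,\kappa\in\mathbb{R}$, $(x)_+^\kappa=x^\kappa$ if $x>0$ and $0$ otherwise. Let $\psi$ be a three times continuously differentiable compactly supported Daubechies mother wavelet generating an orthonormal basis of $L^2(\mathbb{R})$. For $(x,v)\in\mathbb{R}\times(1/\alpha;1)$, $\Psi(x,v)=\int_{\mathbb{R}}(x-s)_+^{v-1/\alpha}\psi(s)\,ds$; for $(j,k)\in\mathbb{Z}^2$, $\epsilon_{j,k}=2^{j/\alpha}\int_{\mathbb{R}}\psi(2^js-k)Z_\alpha(ds)$. $\Omega_0^*$ is an event of probability $1$ such that for every $\eta>0$ there is a positive finite random variable $C_\eta$ with $|\epsilon_{j,k}(\omega)|\le C_\eta(\omega)(3+|j|)^{1/\alpha+\eta}(3+|k|)^{1/\alpha+\eta}$ for all $\omega\in\Omega_0^*$, $(j,k)\in\mathbb{Z}^2$. $\Omega_1^*$ is an event of probability $1$ such that for every $l>0$ there is a positive finite random variable $C'_l$ with $|\epsilon_{j,k}(\omega)|\le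 C'_l(\omega)2^{j/\alpha}$ for all $\omega\in\Omega_1^*$ and all $(j,k)\in\mathbb{Z}_+\times\mathbb{Z}$ with $|k|2^{-j}\le l$ (both events exist). $X(u,v)=\int_{\mathbb{R}}\{(u-s)_+^{v-1/\alpha}-(-s)_+^{v-1/\alpha}\}Z_\alpha(ds)$ is identified with its modification defined on $\Omega_0^*$ by $X(u,v)=\sum_{(j,k)\in\mathbb{Z}^2}2^{-jv}\epsilon_{j,k}(\Psi(2^ju-k,v)-\Psi(-k,v))$, the series converging on $\Omega_0^*$ uniformly in $(u,v)$ on compact subsets of $\mathbb{R}\times(1/\alpha;1)$. *)

theory Defs
  imports "HOL-Probability.Probability"
begin

definition pospow :: "real \<Rightarrow> real \<Rightarrow> real" where
  "pospow x \<kappa> = (if x > 0 then x powr \<kappa> else 0)"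

definition wav :: "(real \<Rightarrow> real) \<Rightarrow> int \<Rightarrow> int \<Rightarrow> real \<Rightarrow> real" where
  "wav \<psi> j k x = 2 powr (real_of_int j / 2) * \<psi> (2 powr (real_of_int j) * x - real_of_int k)"

definition C3 :: "(real \<Rightarrow> real) \<Rightarrow> bool" where
  "C3 f \<longleftrightarrow> (\<forall>i<3. \<forall>x. ((deriv ^^ i) f) differentiable (at x))
               \<and> continuous_on UNIV ((deriv ^^ 3) f)"

definition ONB_wavelet :: "(real \<Rightarrow> real) \<Rightarrow> bool" where
  "ONB_wavelet \<psi> \<longleftrightarrow>
     \<psi> \<in> borel_measurable lborel \<and>
     (\<forall>j k j' k'. integrable lborel (\<lambda>x. wav \<psi> j k x * wav \<psi> j' k' x) \<and>
        (\<integral>x. wav \<psi> j k x * wav \<psi> j' k' x \<partial>lborel) = (if (j, k) = (j', k') then 1 else 0)) \<and>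
     (\<forall>f :: real \<Rightarrow> real. f \<in> borel_measurable lborel \<longrightarrow>
        integrable lborel (\<lambda>x. (f x)\<^sup>2) \<longrightarrow>
        (\<forall>j k. (\<integral>x. f x * wav \<psi> j k x \<partial>lborel) = 0) \<longrightarrow>
        (AE x in lborel. f x = 0))"

definition Psi :: "real \<Rightarrow> (real \<Rightarrow> real) \<Rightarrow> real \<Rightarrow> real \<Rightarrow> real" where
  "Psi \<alpha> \<psi> x v = (\<integral>s. pospow (x - s) (v - 1 / \<alpha>) * \<psi> s \<partial>lborel)"

definition Xser :: "real \<Rightarrow> (real \<Rightarrow> real) \<Rightarrow> (int \<Rightarrow> int \<Rightarrow> 'w \<Rightarrow> real) \<Rightarrow> real \<Rightarrow> real \<Rightarrow> 'w \<Rightarrow> real" where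
  "Xser \<alpha> \<psi> \<epsilon> u v \<omega> =
     (\<Sum>\<^sub>\<infinity>(j, k) \<in> (UNIV :: (int \<times> int) set).
        2 powr (- real_of_int j * v) * \<epsilon> j k \<omega> *
        (Psi \<alpha> \<psi> (2 powr real_of_int j * u - real_of_int k) v - Psi \<alpha> \<psi> (- real_of_int k) v))"

end

theory Submission
  imports Defs
begin


lemma mvt_bound:
  fixes f f' :: "real \<Rightarrow> real"
  assumes "\<And>x. x \<in> {c..d} \<Longrightarrow> (f has_real_derivative f' x) (at x)"
    and "\<And>x. x \<in> {c..d} \<Longrightarrow> \<bar>f' x\<bar> \<le> B"
    and "x \<in> {c..d}" "y \<in> {c..d}"
  shows "\<bar>f x - f y\<bar> \<le> B * \<bar>x - y\<bar>"
proof -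
  have *: "\<bar>f b - f a\<bar> \<le> B * (b - a)" if "a < b" "a \<in> {c..d}" "b \<in> {c..d}" for a b
  proof -
    have "\<exists>z. a < z \<and> z < b \<and> f b - f a = (b - a) * f' z"
      by (rule MVT2[OF \<open>a < b\<close>]) (use assms(1) that in auto)
    then obtain z where z: "a < z" "z < b" "f b - f a = (b - a) * f' z" by blast
    have "z \<in> {c..d}" using z that by auto
    hence "\<bar>f' z\<bar> \<le> B" using assms(2) by auto
    thus ?thesis using z that by (simp add: abs_mult mult_right_mono mult.commute)
  qed
  show ?thesis
  proof (cases x y rule: linorder_cases)
    case less then show ?thesis using *[of x y] assms(3,4) by (simp add: abs_minus_commute)
  next
    case equal then show ?thesis by simp
  next
    case greater then show ?thesis using *[of y x] assms(3,4) by simp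
  qed
qed

lemma taylor2_bound:
  fixes f f1 f2 :: "real \<Rightarrow> real"
  assumes d1: "\<And>x. x \<in> {c..d} \<Longrightarrow> (f has_real_derivative f1 x) (at x)"
    and d2: "\<And>x. x \<in> {c..d} \<Longrightarrow> (f1 has_real_derivative f2 x) (at x)"
    and b: "\<And>x. x \<in> {c..d} \<Longrightarrow> \<bar>f2 x\<bar> \<le> B"
    and s: "s \<in> {c..d}" and z: "0 \<in> {c..d}"
  shows "\<bar>f s - f 0 - s * f1 0\<bar> \<le> B * s\<^sup>2"
proof -
  define g where "g t = f t - f 0 - t * f1 0" for t
  let ?I = "{min 0 s..max 0 s}"
  have sub: "?I \<subseteq> {c..d}" using s z by auto
  have dg: "(g has_real_derivative (f1 t - f1 0)) (at t)" if "t \<in> ?I" for t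
  proof -
    have "t \<in> {c..d}" using that sub by blast
    from d1[OF this] show ?thesis unfolding g_def by (auto intro!: derivative_eq_intros)
  qed
  have B0: "0 \<le> B" using b[OF z] by linarith
  have bd: "\<bar>f1 t - f1 0\<bar> \<le> B * \<bar>s\<bar>" if "t \<in> ?I" for t
  proof -
    have "\<bar>f1 t - f1 0\<bar> \<le> B * \<bar>t - 0\<bar>"
      by (rule mvt_bound[of c d f1 f2 B t 0]) (use d2 b that sub z in auto)
    also have "\<dots> \<le> B * \<bar>s\<bar>" using that B0 by (intro mult_left_mono) auto
    finally show ?thesis .
  qed
  have "\<bar>g s - g 0\<bar> \<le> (B * \<bar>s\<bar>) * \<bar>s - 0\<bar>"
    by (rule mvt_bound[of "min 0 s" "max 0 s" g "\<lambda>t. f1 t - f1 0"]) (use bd sub in \<open>auto intro!: dg\<close>)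
  thus ?thesis by (simp add: g_def power2_eq_square abs_mult_self_eq mult.assoc)
qed

lemma integrable_bdd_supp:
  fixes g :: "real \<Rightarrow> real"
  assumes "g \<in> borel_measurable borel" "\<And>x. \<bar>g x\<bar> \<le> C * indicator {a..b} x"
  shows "integrable lborel g"
proof (rule Bochner_Integration.integrable_bound[where M=lborel and f="\<lambda>x. C * indicator {a..b} x :: real"])
  show "integrable lborel (\<lambda>x. C * indicator {a..b} x :: real)"
    by (intro integrable_mult_right integrable_real_indicator) (auto simp: emeasure_lborel_Icc_eq)
  show "g \<in> borel_measurable lborel" using assms(1) by simp
  show "AE x in lborel. norm (g x) \<le> norm (C * indicator {a..b} x :: real)"
    using assms(2) by (auto intro!: AE_I2 order.trans[OF _ abs_ge_self])
qed

lemma integral_bdd_supp: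
  fixes g :: "real \<Rightarrow> real"
  assumes "\<And>x. \<bar>g x\<bar> \<le> C * indicator {a..b} x" "a \<le> b"
  shows "\<bar>integral\<^sup>L lborel g\<bar> \<le> C * (b - a)"
proof -
  have "\<bar>integral\<^sup>L lborel g\<bar> \<le> (\<integral>x. \<bar>g x\<bar> \<partial>lborel)" by simp
  also have "\<dots> \<le> (\<integral>x. C * indicator {a..b} x \<partial>lborel)"
  proof (rule integral_mono')
    show "integrable lborel (\<lambda>x. C * indicator {a..b} x :: real)"
      by (intro integrable_mult_right integrable_real_indicator) (auto simp: emeasure_lborel_Icc_eq)
  qed (use assms(1) in \<open>auto intro: order.trans[OF abs_ge_zero]\<close>)
  also have "\<dots> = C * (b - a)" using assms(2) by simp
  finally show ?thesis .
qed

lemma pospow_meas[measurable]: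
  "f \<in> borel_measurable M \<Longrightarrow> (\<lambda>x. pospow (f x) k) \<in> borel_measurable M"
  unfolding pospow_def by (rule measurable_If) auto


lemma real_lt_two_pow: "real n < 2 ^ n"
proof -
  have "n < 2 ^ n" by (rule less_exp)
  hence "real n < real (2 ^ n)" by linarith
  thus ?thesis by simp
qed

lemma small_zero:
  fixes a K :: real
  assumes "\<And>j. j \<ge> J \<Longrightarrow> \<bar>a\<bar> \<le> K / 2 ^ j"
  shows "a = 0"
proof (rule ccontr)
  assume a: "a \<noteq> 0"
  hence ap: "0 < \<bar>a\<bar>" by simp
  have "0 \<le> K / 2 ^ J" using assms[of J] by linarith
  moreover have "(0::real) < 2 ^ J" by simp
  ultimately have K0: "0 \<le> K" by (auto simp: zero_le_divide_iff)
  obtain n :: nat where n: "K / \<bar>a\<bar> < real n" using reals_Archimedean2 by blast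
  define j where "j = max J n"
  have jn: "real n \<le> real j" by (simp add: j_def)
  have Kj: "K < real j * \<bar>a\<bar>"
  proof -
    have "K / \<bar>a\<bar> < real j" using n jn by linarith
    thus ?thesis using ap by (simp add: divide_less_eq)
  qed
  have j2: "real j < 2 ^ j" by (rule real_lt_two_pow)
  have "\<bar>a\<bar> \<le> K / 2 ^ j" using assms j_def by simp
  hence "\<bar>a\<bar> * 2 ^ j \<le> K" by (simp add: le_divide_eq)
  moreover have "real j * \<bar>a\<bar> \<le> 2 ^ j * \<bar>a\<bar>" using j2 ap by (intro mult_right_mono) auto
  ultimately show False using Kj by (simp add: mult.commute)
qed

lemma dyadic_nz:
  fixes f :: "real \<Rightarrow> real"
  assumes "continuous_on UNIV f" "f x1 \<noteq> 0"
  shows "\<exists>(m::int) (n::nat). f (real_of_int m / 2 ^ n) \<noteq> 0"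
proof -
  have "continuous (at x1) f" using assms(1) by (simp add: continuous_on_eq_continuous_at)
  then obtain e where e: "e > 0" "\<And>y. dist x1 y < e \<Longrightarrow> f y \<noteq> 0"
    using continuous_at_avoid[of x1 f 0] assms(2) by blast
  obtain n :: nat where n: "1 / e < real n" using reals_Archimedean2 by blast
  have "1 / e < 2 ^ n" using n real_lt_two_pow[of n] by linarith
  hence en: "1 / 2 ^ n < e" using e by (simp add: field_simps)
  define m where "m = \<lfloor>x1 * 2 ^ n\<rfloor>"
  have "real_of_int m \<le> x1 * 2 ^ n" "x1 * 2 ^ n < real_of_int m + 1" unfolding m_def by linarith+
  moreover have "x1 - real_of_int m / 2 ^ n = (x1 * 2 ^ n - real_of_int m) / 2 ^ n"
    by (simp add: field_simps)
  ultimately have "\<bar>x1 - real_of_int m / 2 ^ n\<bar> < 1 / 2 ^ n"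
    by (simp add: divide_strict_right_mono)
  hence "dist x1 (real_of_int m / 2 ^ n) < e" using en by (simp add: dist_real_def)
  thus ?thesis using e by blast
qed

lemma bdd_cont_supp:
  fixes f :: "real \<Rightarrow> real"
  assumes "continuous_on UNIV f" "\<And>x. R < \<bar>x\<bar> \<Longrightarrow> f x = 0"
  shows "\<exists>B. \<forall>x. \<bar>f x\<bar> \<le> B"
proof -
  have "compact (f ` {-R..R})"
    by (rule compact_continuous_image) (use assms(1) continuous_on_subset in auto)
  then obtain B where B: "\<forall>y\<in>f ` {-R..R}. norm y \<le> B"
    using compact_imp_bounded bounded_iff by metis
  have "\<bar>f x\<bar> \<le> max B 0" for x
  proof (cases "R < \<bar>x\<bar>")
    case True then show ?thesis using assms(2) by simp
  next
    case False then have "x \<in> {-R..R}" by auto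
    then show ?thesis using B by force
  qed
  thus ?thesis by blast
qed

locale psiw =
  fixes \<psi> \<psi>1 \<psi>2 :: "real \<Rightarrow> real" and R :: real
  assumes R1: "1 \<le> R"
    and supp: "\<And>x. R < \<bar>x\<bar> \<Longrightarrow> \<psi> x = 0"
    and d1: "\<And>x. (\<psi> has_real_derivative \<psi>1 x) (at x)"
    and d2: "\<And>x. (\<psi>1 has_real_derivative \<psi>2 x) (at x)"
    and c2: "continuous_on UNIV \<psi>2"
    and nz: "\<exists>x. \<psi> x \<noteq> 0"
    and ortho: "\<And>(j::nat) k. 1 \<le> j \<Longrightarrow> (\<integral>x. \<psi> x * \<psi> (2 ^ j * x - real_of_int k) \<partial>lborel) = 0"
begin

lemma deriv_supp:
  fixes f f' :: "real \<Rightarrow> real"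
  assumes "\<And>x. (f has_real_derivative f' x) (at x)" "\<And>x. R < \<bar>x\<bar> \<Longrightarrow> f x = 0" "R < \<bar>x\<bar>"
  shows "f' x = 0"
proof -
  have "((\<lambda>_. 0::real) has_real_derivative 0) (at x)" by simp
  hence "(f has_real_derivative 0) (at x)"
  proof (rule has_field_derivative_transform_within_open[where S="{z. R < \<bar>z\<bar>}"])
    show "open {z::real. R < \<bar>z\<bar>}" by (intro open_Collect_less continuous_intros)
  qed (use assms in auto)
  thus ?thesis using assms(1) DERIV_unique by blast
qed

lemma supp1: "R < \<bar>x\<bar> \<Longrightarrow> \<psi>1 x = 0"
  by (rule deriv_supp[OF d1 supp])

lemma supp2: "R < \<bar>x\<bar> \<Longrightarrow> \<psi>2 x = 0"
  by (rule deriv_supp[OF d2 supp1])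

lemma cont0: "continuous_on UNIV \<psi>"
  using d1 DERIV_isCont continuous_at_imp_continuous_on by blast
lemma cont1: "continuous_on UNIV \<psi>1"
  using d2 DERIV_isCont continuous_at_imp_continuous_on by blast

lemma meas0[measurable]: "\<psi> \<in> borel_measurable borel"
  by (rule borel_measurable_continuous_onI[OF cont0])
lemma meas1[measurable]: "\<psi>1 \<in> borel_measurable borel"
  by (rule borel_measurable_continuous_onI[OF cont1])

definition "B0 = (SOME B. \<forall>x. \<bar>\<psi> x\<bar> \<le> B)"
definition "B1 = (SOME B. \<forall>x. \<bar>\<psi>1 x\<bar> \<le> B)"
definition "B2 = (SOME B. \<forall>x. \<bar>\<psi>2 x\<bar> \<le> B)"

lemma B0: "\<bar>\<psi> x\<bar> \<le> B0"
  using someI_ex[OF bdd_cont_supp[OF cont0 supp]] unfolding B0_def by blast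
lemma B1: "\<bar>\<psi>1 x\<bar> \<le> B1"
  using someI_ex[OF bdd_cont_supp[OF cont1 supp1]] unfolding B1_def by blast
lemma B2: "\<bar>\<psi>2 x\<bar> \<le> B2"
  using someI_ex[OF bdd_cont_supp[OF c2 supp2]] unfolding B2_def by blast

lemma B0_nonneg: "0 \<le> B0" using B0[of 0] by linarith
lemma B1_nonneg: "0 \<le> B1" using B1[of 0] by linarith
lemma B2_nonneg: "0 \<le> B2" using B2[of 0] by linarith

lemma psi_ind: "\<bar>\<psi> x\<bar> \<le> B0 * indicator {-R..R} x"
  using B0[of x] supp[of x] by (auto simp: indicator_def)

lemma lip0: "\<bar>\<psi> x - \<psi> y\<bar> \<le> B1 * \<bar>x - y\<bar>"
  by (rule mvt_bound[of "min x y" "max x y" \<psi> \<psi>1]) (use d1 B1 in auto)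

lemma taylor_psi: "\<bar>\<psi> (t + x0) - \<psi> x0 - t * \<psi>1 x0\<bar> \<le> B2 * t\<^sup>2"
proof -
  have "\<bar>(\<lambda>t. \<psi> (t + x0)) t - (\<lambda>t. \<psi> (t + x0)) 0 - t * (\<lambda>t. \<psi>1 (t + x0)) 0\<bar> \<le> B2 * t\<^sup>2"
  proof (rule taylor2_bound[of "min 0 t" "max 0 t" _ _ "\<lambda>t. \<psi>2 (t + x0)"])
    fix x show "((\<lambda>t. \<psi> (t + x0)) has_real_derivative \<psi>1 (x + x0)) (at x)"
      using d1[of "x + x0"] DERIV_shift by blast
    show "((\<lambda>t. \<psi>1 (t + x0)) has_real_derivative \<psi>2 (x + x0)) (at x)"
      using d2[of "x + x0"] DERIV_shift by blast
    show "\<bar>\<psi>2 (x + x0)\<bar> \<le> B2" by (rule B2)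
  qed auto
  thus ?thesis by simp
qed

definition "I0 = (\<integral>x. \<psi> x \<partial>lborel)"
definition "I1 = (\<integral>x. x * \<psi> x \<partial>lborel)"

lemma int0: "integrable lborel \<psi>"
  by (rule integrable_bdd_supp[OF meas0 psi_ind])

lemma int1: "integrable lborel (\<lambda>x. x * \<psi> x)"
proof (rule integrable_bdd_supp[where C="R * B0" and a="-R" and b=R])
  fix x show "\<bar>x * \<psi> x\<bar> \<le> R * B0 * indicator {-R..R} x"
    using B0[of x] supp[of x] R1 by (auto simp: indicator_def abs_mult intro!: mult_mono)
qed measurable

lemma shift_ortho:
  assumes "1 \<le> j"
  shows "(\<integral>y. \<psi> (y / 2 ^ j + real_of_int k / 2 ^ j) * \<psi> y \<partial>lborel) = 0"
proof -
  define c :: real where "c = 1 / 2 ^ j"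
  have c0: "c \<noteq> 0" by (simp add: c_def)
  have "0 = (\<integral>x. \<psi> x * \<psi> (2 ^ j * x - real_of_int k) \<partial>lborel)" using ortho[OF assms] by simp
  also have "\<dots> = \<bar>c\<bar> * (\<integral>x. \<psi> (real_of_int k / 2 ^ j + c * x) *
      \<psi> (2 ^ j * (real_of_int k / 2 ^ j + c * x) - real_of_int k) \<partial>lborel)"
    using lborel_integral_real_affine[OF c0, of "\<lambda>x. \<psi> x * \<psi> (2 ^ j * x - real_of_int k)"
        "real_of_int k / 2 ^ j"] by simp
  also have "(\<lambda>x. \<psi> (real_of_int k / 2 ^ j + c * x) * \<psi> (2 ^ j * (real_of_int k / 2 ^ j + c * x) - real_of_int k))
      = (\<lambda>y. \<psi> (y / 2 ^ j + real_of_int k / 2 ^ j) * \<psi> y)"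
    by (rule ext) (simp add: c_def field_simps)
  finally show ?thesis using c0 by simp
qed

lemma dyadic_ortho:
  assumes "max n 1 \<le> j"
  shows "(\<integral>y. \<psi> (y / 2 ^ j + real_of_int m / 2 ^ n) * \<psi> y \<partial>lborel) = 0"
proof -
  have eq: "real_of_int (m * 2 ^ (j - n)) / 2 ^ j = real_of_int m / 2 ^ n"
  proof -
    have "(2::real) ^ j = 2 ^ (j - n) * 2 ^ n" using assms by (simp flip: power_add)
    thus ?thesis by simp
  qed
  show ?thesis using shift_ortho[of j "m * 2 ^ (j - n)"] assms eq by simp
qed

lemma moment0_aux: "\<psi> (real_of_int m / 2 ^ n) * I0 = 0"
proof -
  define x0 where "x0 = real_of_int m / 2 ^ n"
  have "\<bar>\<psi> x0 * I0\<bar> \<le> (2 * R * R * B0 * B1) / 2 ^ j" if j: "max n 1 \<le> j" for j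
  proof -
    define h :: real where "h = 1 / 2 ^ j"
    have h0: "0 < h" by (simp add: h_def)
    have i1: "integrable lborel (\<lambda>y. \<psi> (y / 2 ^ j + x0) * \<psi> y)"
    proof (rule integrable_bdd_supp[where C="B0 * B0" and a="-R" and b=R])
      fix y show "\<bar>\<psi> (y / 2 ^ j + x0) * \<psi> y\<bar> \<le> B0 * B0 * indicator {-R..R} y"
        using psi_ind[of y] B0[of "y / 2 ^ j + x0"] B0_nonneg
        by (auto simp: abs_mult indicator_def intro: mult_mono)
    qed measurable
    have "(\<integral>y. (\<psi> (y / 2 ^ j + x0) - \<psi> x0) * \<psi> y \<partial>lborel)
        = (\<integral>y. \<psi> (y / 2 ^ j + x0) * \<psi> y \<partial>lborel) - (\<integral>y. \<psi> x0 * \<psi> y \<partial>lborel)"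
      using i1 int0 by (simp add: left_diff_distrib)
    also have "\<dots> = - (\<psi> x0 * I0)" using dyadic_ortho[OF j] by (simp add: x0_def I0_def)
    finally have eq: "(\<integral>y. (\<psi> (y / 2 ^ j + x0) - \<psi> x0) * \<psi> y \<partial>lborel) = - (\<psi> x0 * I0)" .
    have "\<bar>\<integral>y. (\<psi> (y / 2 ^ j + x0) - \<psi> x0) * \<psi> y \<partial>lborel\<bar> \<le> (B1 * R * h * B0) * (R - - R)"
    proof (rule integral_bdd_supp)
      fix y
      show "\<bar>(\<psi> (y / 2 ^ j + x0) - \<psi> x0) * \<psi> y\<bar> \<le> B1 * R * h * B0 * indicator {-R..R} y"
      proof (cases "\<bar>y\<bar> \<le> R")
        case True
        have "\<bar>\<psi> (y / 2 ^ j + x0) - \<psi> x0\<bar> \<le> B1 * \<bar>y / 2 ^ j\<bar>" using lip0[of "y / 2 ^ j + x0" x0] by simp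
        also have "\<dots> \<le> B1 * (R * h)" using True B1_nonneg
          by (intro mult_left_mono) (auto simp: h_def field_simps)
        finally have "\<bar>\<psi> (y / 2 ^ j + x0) - \<psi> x0\<bar> * \<bar>\<psi> y\<bar> \<le> B1 * (R * h) * B0"
          using B0[of y] by (intro mult_mono) auto
        moreover have "y \<in> {-R..R}" using True by auto
        ultimately show ?thesis by (simp add: abs_mult mult_ac)
      next
        case False
        hence "y \<notin> {-R..R}" by auto
        thus ?thesis using supp[of y] False by simp
      qed
    qed (use R1 in simp)
    hence "\<bar>\<psi> x0 * I0\<bar> \<le> (B1 * R * h * B0) * (2 * R)" using eq by simp
    thus ?thesis by (simp add: h_def field_simps)
  qed
  hence "\<psi> x0 * I0 = 0" by (intro small_zero[where J="max n 1"]) auto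
  thus ?thesis by (simp add: x0_def)
qed

lemma I0_zero: "I0 = 0"
proof -
  obtain x1 where "\<psi> x1 \<noteq> 0" using nz by blast
  then obtain m n where "\<psi> (real_of_int m / 2 ^ n) \<noteq> 0" using dyadic_nz[OF cont0] by blast
  thus ?thesis using moment0_aux[of m n] by simp
qed

end

context psiw begin

declare meas0[measurable] meas1[measurable]

lemma moment1_aux: "\<psi>1 (real_of_int m / 2 ^ n) * I1 = 0"
proof -
  define x0 where "x0 = real_of_int m / 2 ^ n"
  have "\<bar>\<psi>1 x0 * I1\<bar> \<le> (2 * R * R * R * B0 * B2) / 2 ^ j" if j: "max n 1 \<le> j" for j
  proof -
    define h :: real where "h = 1 / 2 ^ j"
    have h0: "0 < h" by (simp add: h_def)
    define r where "r y = \<psi> (y * h + x0) - \<psi> x0 - (y * h) * \<psi>1 x0" for y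
    have ir: "integrable lborel (\<lambda>y. r y * \<psi> y)"
    proof (rule integrable_bdd_supp[where C="(B0 + B0 + R * h * B1) * B0" and a="-R" and b=R])
      fix y show "\<bar>r y * \<psi> y\<bar> \<le> (B0 + B0 + R * h * B1) * B0 * indicator {-R..R} y"
      proof (cases "\<bar>y\<bar> \<le> R")
        case True
        have "\<bar>y * h * \<psi>1 x0\<bar> \<le> R * h * B1" using True h0 B1[of x0]
          by (auto simp: abs_mult intro!: mult_mono)
        hence "\<bar>r y\<bar> \<le> B0 + B0 + R * h * B1" unfolding r_def
          using B0[of "y * h + x0"] B0[of x0] by linarith
        hence "\<bar>r y\<bar> * \<bar>\<psi> y\<bar> \<le> (B0 + B0 + R * h * B1) * B0"
          using B0[of y] by (intro mult_mono) auto
        moreover have "y \<in> {-R..R}" using True by auto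
        ultimately show ?thesis by (simp add: abs_mult)
      next
        case False
        hence "y \<notin> {-R..R}" by auto
        thus ?thesis using supp[of y] False by simp
      qed
    qed (unfold r_def, measurable)
    have e1: "(\<lambda>y. \<psi> (y / 2 ^ j + x0) * \<psi> y) = (\<lambda>y. \<psi> (y * h + x0) * \<psi> y)"
      by (simp add: h_def)
    have e2: "(\<lambda>y. \<psi> (y * h + x0) * \<psi> y) = (\<lambda>y. r y * \<psi> y + (\<psi> x0 * \<psi> y + (h * \<psi>1 x0) * (y * \<psi> y)))"
      by (rule ext) (simp add: r_def algebra_simps)
    have iB: "integrable lborel (\<lambda>y. \<psi> x0 * \<psi> y)" using int0 by simp
    have iC: "integrable lborel (\<lambda>y. (h * \<psi>1 x0) * (y * \<psi> y))" using int1 by simp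
    have "0 = (\<integral>y. \<psi> (y / 2 ^ j + x0) * \<psi> y \<partial>lborel)"
      using dyadic_ortho[OF j, of m] by (simp add: x0_def)
    also have "\<dots> = (\<integral>y. r y * \<psi> y + (\<psi> x0 * \<psi> y + (h * \<psi>1 x0) * (y * \<psi> y)) \<partial>lborel)"
      by (simp only: e1 e2)
    also have "\<dots> = (\<integral>y. r y * \<psi> y \<partial>lborel) + (\<integral>y. \<psi> x0 * \<psi> y + (h * \<psi>1 x0) * (y * \<psi> y) \<partial>lborel)"
      by (rule Bochner_Integration.integral_add[OF ir Bochner_Integration.integrable_add[OF iB iC]])
    also have "(\<integral>y. \<psi> x0 * \<psi> y + (h * \<psi>1 x0) * (y * \<psi> y) \<partial>lborel)
        = (\<integral>y. \<psi> x0 * \<psi> y \<partial>lborel) + (\<integral>y. (h * \<psi>1 x0) * (y * \<psi> y) \<partial>lborel)"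
      by (rule Bochner_Integration.integral_add[OF iB iC])
    also have "\<dots> = \<psi> x0 * I0 + (h * \<psi>1 x0) * I1"
      by (simp only: integral_mult_right_zero I0_def I1_def)
    finally have eq: "(h * \<psi>1 x0) * I1 = - (\<integral>y. r y * \<psi> y \<partial>lborel)" using I0_zero by simp
    have "\<bar>\<integral>y. r y * \<psi> y \<partial>lborel\<bar> \<le> (B2 * h\<^sup>2 * R\<^sup>2 * B0) * (R - - R)"
    proof (rule integral_bdd_supp)
      fix y
      show "\<bar>r y * \<psi> y\<bar> \<le> B2 * h\<^sup>2 * R\<^sup>2 * B0 * indicator {-R..R} y"
      proof (cases "\<bar>y\<bar> \<le> R")
        case True
        have "\<bar>r y\<bar> \<le> B2 * (y * h)\<^sup>2" unfolding r_def by (rule taylor_psi)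
        also have "\<dots> \<le> B2 * (h\<^sup>2 * R\<^sup>2)"
        proof -
          have "y\<^sup>2 \<le> R\<^sup>2" using True R1 abs_le_square_iff[of y R] by simp
          hence "h\<^sup>2 * y\<^sup>2 \<le> h\<^sup>2 * R\<^sup>2" by (rule mult_left_mono) simp
          hence "(y * h)\<^sup>2 \<le> h\<^sup>2 * R\<^sup>2" by (simp add: power_mult_distrib mult.commute)
          thus ?thesis using B2_nonneg by (rule mult_left_mono)
        qed
        finally have "\<bar>r y\<bar> * \<bar>\<psi> y\<bar> \<le> B2 * (h\<^sup>2 * R\<^sup>2) * B0"
          using B0[of y] by (intro mult_mono) auto
        moreover have "y \<in> {-R..R}" using True by auto
        ultimately show ?thesis by (simp add: abs_mult mult_ac)
      next
        case False
        hence "y \<notin> {-R..R}" by auto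
        thus ?thesis using supp[of y] False by simp
      qed
    qed (use R1 in simp)
    hence "h * \<bar>\<psi>1 x0 * I1\<bar> \<le> (B2 * h\<^sup>2 * R\<^sup>2 * B0) * (2 * R)" using eq h0 by (simp add: abs_mult)
    also have "(B2 * h\<^sup>2 * R\<^sup>2 * B0) * (2 * R) = h * ((2 * R * R * R * B0 * B2) * h)"
      by (simp add: power2_eq_square)
    finally have "\<bar>\<psi>1 x0 * I1\<bar> \<le> (2 * R * R * R * B0 * B2) * h"
      using h0 by (simp only: mult_le_cancel_left_pos)
    thus ?thesis by (simp add: h_def)
  qed
  hence "\<psi>1 x0 * I1 = 0" by (intro small_zero[where J="max n 1"]) auto
  thus ?thesis by (simp add: x0_def)
qed

lemma I1_zero: "I1 = 0"
proof -
  have "\<exists>x1. \<psi>1 x1 \<noteq> 0"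
  proof (rule ccontr)
    assume "\<not> (\<exists>x1. \<psi>1 x1 \<noteq> 0)"
    hence "\<forall>x. (\<psi> has_real_derivative 0) (at x)" using d1 by metis
    hence "\<psi> x = \<psi> (R + 1)" for x by (rule DERIV_isconst_all)
    moreover have "\<psi> (R + 1) = 0" using supp R1 by simp
    ultimately show False using nz by simp
  qed
  then obtain x1 where "\<psi>1 x1 \<noteq> 0" by blast
  then obtain m n where "\<psi>1 (real_of_int m / 2 ^ n) \<noteq> 0" using dyadic_nz[OF cont1] by blast
  thus ?thesis using moment1_aux[of m n] by simp
qed

end


lemma pospow_nonneg: "0 \<le> pospow x k"
  by (simp add: pospow_def)

lemma pospow_le: assumes "0 < k" "k \<le> 1" "x \<le> T" "1 \<le> T" shows "pospow x k \<le> T"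
proof (cases "x > 0")
  case True
  have "x powr k \<le> T powr k" using True assms by (intro powr_mono2) auto
  also have "\<dots> \<le> T powr 1" using assms by (intro powr_mono) auto
  finally show ?thesis using True assms by (simp add: pospow_def)
next
  case False then show ?thesis using assms by (simp add: pospow_def)
qed

lemma powr_div_bound:
  fixes x c e :: real
  assumes "0 < x" "1 \<le> c" "-3 \<le> e" "e \<le> 0"
  shows "(x / c) powr e \<le> c ^ 3 * x powr e"
proof -
  have "(x / c) powr e = x powr e * c powr (- e)"
    using assms by (subst powr_divide) (auto simp: powr_minus divide_inverse)
  also have "c powr (- e) \<le> c powr 3" using assms by (intro powr_mono) auto
  hence "x powr e * c powr (- e) \<le> x powr e * c powr 3" by (intro mult_left_mono) auto
  also have "c powr 3 = c ^ 3" using assms by (simp add: powr_realpow)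
  finally show ?thesis by (simp add: mult.commute)
qed

context psiw begin

declare meas0[measurable] meas1[measurable]

definition G :: "real \<Rightarrow> real \<Rightarrow> real" where
  "G \<gamma> y = (\<integral>s. pospow (y - s) \<gamma> * \<psi> s \<partial>lborel)"

lemma G_zero: assumes "y \<le> -R" shows "G \<gamma> y = 0"
proof -
  have "pospow (y - s) \<gamma> * \<psi> s = 0" for s
  proof (cases "R < \<bar>s\<bar>")
    case True then show ?thesis using supp by simp
  next
    case False then have "y - s \<le> 0" using assms by auto
    then show ?thesis by (simp add: pospow_def)
  qed
  hence "(\<lambda>s. pospow (y - s) \<gamma> * \<psi> s) = (\<lambda>s. 0)" by (rule ext)
  thus ?thesis by (simp add: G_def)
qed

definition "C0 = (4 * R + 2) * B0 * (2 * R)"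
definition "L0 = (4 * R + 2) * B1 * (4 * R + 2)"
definition "K0 = 2 * R ^ 3 * B0"

lemma G_bdd: assumes "0 < \<gamma>" "\<gamma> \<le> 1" "y \<le> 3 * R + 2" shows "\<bar>G \<gamma> y\<bar> \<le> C0"
proof -
  have "\<bar>G \<gamma> y\<bar> \<le> ((4 * R + 2) * B0) * (R - - R)"
    unfolding G_def
  proof (rule integral_bdd_supp)
    fix s show "\<bar>pospow (y - s) \<gamma> * \<psi> s\<bar> \<le> (4 * R + 2) * B0 * indicator {-R..R} s"
    proof (cases "\<bar>s\<bar> \<le> R")
      case True
      have "pospow (y - s) \<gamma> \<le> 4 * R + 2" using True assms R1 by (intro pospow_le) auto
      hence "pospow (y - s) \<gamma> * \<bar>\<psi> s\<bar> \<le> (4 * R + 2) * B0"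
        using B0[of s] pospow_nonneg R1 by (intro mult_mono) auto
      moreover have "s \<in> {-R..R}" using True by auto
      ultimately show ?thesis by (simp add: abs_mult pospow_nonneg)
    next
      case False
      hence "s \<notin> {-R..R}" by auto
      thus ?thesis using supp[of s] False by simp
    qed
  qed (use R1 in simp)
  thus ?thesis by (simp add: C0_def)
qed

lemma G_tform: "G \<gamma> y = (\<integral>t. pospow t \<gamma> * \<psi> (y - t) \<partial>lborel)"
  unfolding G_def
  using lborel_integral_real_affine[of "-1" "\<lambda>s. pospow (y - s) \<gamma> * \<psi> s" y] by simp

lemma tform_int: assumes "0 < \<gamma>" "\<gamma> \<le> 1" "y \<le> 3 * R + 2"
  shows "integrable lborel (\<lambda>t. pospow t \<gamma> * \<psi> (y - t))"
proof (rule integrable_bdd_supp[where C="(4 * R + 2) * B0" and a=0 and b="4 * R + 2"])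
  fix t show "\<bar>pospow t \<gamma> * \<psi> (y - t)\<bar> \<le> (4 * R + 2) * B0 * indicator {0..4 * R + 2} t"
  proof (cases "t \<in> {0..4 * R + 2}")
    case True
    have "pospow t \<gamma> \<le> 4 * R + 2" using True assms R1 by (intro pospow_le) auto
    hence "pospow t \<gamma> * \<bar>\<psi> (y - t)\<bar> \<le> (4 * R + 2) * B0"
      using B0[of "y - t"] pospow_nonneg R1 by (intro mult_mono) auto
    thus ?thesis using True by (simp add: abs_mult pospow_nonneg)
  next
    case False
    hence "t < 0 \<or> t > 4 * R + 2" by auto
    thus ?thesis
    proof
      assume "t < 0" thus ?thesis using False by (simp add: pospow_def)
    next
      assume "t > 4 * R + 2" hence "R < \<bar>y - t\<bar>" using assms by auto
      thus ?thesis using supp[of "y - t"] False by simp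
    qed
  qed
qed measurable

lemma G_lip: assumes "0 < \<gamma>" "\<gamma> \<le> 1" "y1 \<le> 3 * R + 2" "y2 \<le> 3 * R + 2"
  shows "\<bar>G \<gamma> y1 - G \<gamma> y2\<bar> \<le> L0 * \<bar>y1 - y2\<bar>"
proof -
  have "G \<gamma> y1 - G \<gamma> y2 = (\<integral>t. pospow t \<gamma> * \<psi> (y1 - t) - pospow t \<gamma> * \<psi> (y2 - t) \<partial>lborel)"
    unfolding G_tform using tform_int[OF assms(1,2,3)] tform_int[OF assms(1,2,4)] by simp
  also have "\<bar>\<dots>\<bar> \<le> ((4 * R + 2) * B1 * \<bar>y1 - y2\<bar>) * (4 * R + 2 - 0)"
  proof (rule integral_bdd_supp)
    fix t show "\<bar>pospow t \<gamma> * \<psi> (y1 - t) - pospow t \<gamma> * \<psi> (y2 - t)\<bar>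
        \<le> (4 * R + 2) * B1 * \<bar>y1 - y2\<bar> * indicator {0..4 * R + 2} t"
    proof (cases "t \<in> {0..4 * R + 2}")
      case True
      have "pospow t \<gamma> \<le> 4 * R + 2" using True assms R1 by (intro pospow_le) auto
      moreover have "\<bar>\<psi> (y1 - t) - \<psi> (y2 - t)\<bar> \<le> B1 * \<bar>y1 - y2\<bar>"
        using lip0[of "y1 - t" "y2 - t"] by simp
      ultimately have "pospow t \<gamma> * \<bar>\<psi> (y1 - t) - \<psi> (y2 - t)\<bar> \<le> (4 * R + 2) * (B1 * \<bar>y1 - y2\<bar>)"
        using pospow_nonneg R1 by (intro mult_mono) auto
      thus ?thesis using True
        by (simp add: abs_mult pospow_nonneg right_diff_distrib[symmetric] mult_ac)
    next
      case False
      hence "t < 0 \<or> t > 4 * R + 2" by auto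
      thus ?thesis
      proof
        assume "t < 0" thus ?thesis using False by (simp add: pospow_def)
      next
        assume "t > 4 * R + 2" hence "R < \<bar>y1 - t\<bar>" "R < \<bar>y2 - t\<bar>" using assms by auto
        thus ?thesis using supp[of "y1 - t"] supp[of "y2 - t"] False by simp
      qed
    qed
  qed (use R1 in simp)
  finally show ?thesis by (simp add: L0_def mult_ac)
qed

lemma mom_bound:
  fixes f f1 f2 :: "real \<Rightarrow> real"
  assumes fm: "f \<in> borel_measurable borel"
    and d1f: "\<And>x. x \<in> {-R..R} \<Longrightarrow> (f has_real_derivative f1 x) (at x)"
    and d2f: "\<And>x. x \<in> {-R..R} \<Longrightarrow> (f1 has_real_derivative f2 x) (at x)"
    and bf: "\<And>x. x \<in> {-R..R} \<Longrightarrow> \<bar>f2 x\<bar> \<le> B"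
  shows "\<bar>\<integral>s. f s * \<psi> s \<partial>lborel\<bar> \<le> B * K0"
proof -
  note fm[measurable]
  have z: "0 \<in> {-R..R}" using R1 by auto
  have B: "0 \<le> B" using bf[OF z] by linarith
  define q where "q s = f s - f 0 - s * f1 0" for s
  have qb: "\<bar>q s\<bar> \<le> B * s\<^sup>2" if "s \<in> {-R..R}" for s
    unfolding q_def by (rule taylor2_bound[OF d1f d2f bf that z])
  have qb2: "\<bar>q s * \<psi> s\<bar> \<le> (B * R\<^sup>2 * B0) * indicator {-R..R} s" for s
  proof (cases "s \<in> {-R..R}")
    case True
    have "s\<^sup>2 \<le> R\<^sup>2" using True abs_le_square_iff[of s R] R1 by auto
    hence "\<bar>q s\<bar> \<le> B * R\<^sup>2" using qb[OF True] mult_left_mono[OF \<open>s\<^sup>2 \<le> R\<^sup>2\<close> B] by linarith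
    hence "\<bar>q s\<bar> * \<bar>\<psi> s\<bar> \<le> (B * R\<^sup>2) * B0" using B0[of s] by (intro mult_mono) auto
    thus ?thesis using True by (simp add: abs_mult)
  next
    case False
    hence "R < \<bar>s\<bar>" by auto
    thus ?thesis using supp[of s] False by simp
  qed
  have iq: "integrable lborel (\<lambda>s. q s * \<psi> s)"
    by (rule integrable_bdd_supp[OF _ qb2]) (unfold q_def, measurable)
  have iB: "integrable lborel (\<lambda>s. f 0 * \<psi> s)" using int0 by simp
  have iC: "integrable lborel (\<lambda>s. f1 0 * (s * \<psi> s))" using int1 by simp
  have e: "(\<lambda>s. f s * \<psi> s) = (\<lambda>s. q s * \<psi> s + (f 0 * \<psi> s + f1 0 * (s * \<psi> s)))"
    by (rule ext) (simp add: q_def algebra_simps)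
  have "(\<integral>s. f s * \<psi> s \<partial>lborel) = (\<integral>s. q s * \<psi> s + (f 0 * \<psi> s + f1 0 * (s * \<psi> s)) \<partial>lborel)"
    by (simp only: e)
  also have "\<dots> = (\<integral>s. q s * \<psi> s \<partial>lborel) + (\<integral>s. f 0 * \<psi> s + f1 0 * (s * \<psi> s) \<partial>lborel)"
    by (rule Bochner_Integration.integral_add[OF iq Bochner_Integration.integrable_add[OF iB iC]])
  also have "(\<integral>s. f 0 * \<psi> s + f1 0 * (s * \<psi> s) \<partial>lborel)
      = (\<integral>s. f 0 * \<psi> s \<partial>lborel) + (\<integral>s. f1 0 * (s * \<psi> s) \<partial>lborel)"
    by (rule Bochner_Integration.integral_add[OF iB iC])
  also have "\<dots> = f 0 * I0 + f1 0 * I1"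
    by (simp only: integral_mult_right_zero I0_def I1_def)
  finally have eq: "(\<integral>s. f s * \<psi> s \<partial>lborel) = (\<integral>s. q s * \<psi> s \<partial>lborel)"
    using I0_zero I1_zero by simp
  have "\<bar>\<integral>s. q s * \<psi> s \<partial>lborel\<bar> \<le> (B * R\<^sup>2 * B0) * (R - - R)"
    by (rule integral_bdd_supp[OF qb2]) (use R1 in simp)
  thus ?thesis using eq by (simp add: K0_def power2_eq_square power3_eq_cube mult_ac)
qed

end


lemma powr_diff_bound:
  fixes r1 r2 m e :: real
  assumes "0 < m" "m \<le> r1" "m \<le> r2" "e \<le> 0"
  shows "\<bar>r1 powr e - r2 powr e\<bar> \<le> (\<bar>e\<bar> * m powr (e - 1)) * \<bar>r1 - r2\<bar>"
proof (rule mvt_bound[of "min r1 r2" "max r1 r2" "\<lambda>r. r powr e" "\<lambda>r. e * r powr (e - 1)"])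
  fix x assume x: "x \<in> {min r1 r2..max r1 r2}"
  hence xm: "m \<le> x" using assms by auto
  show "((\<lambda>r. r powr e) has_real_derivative e * x powr (e - 1)) (at x)"
    using xm assms by (intro has_real_derivative_powr) auto
  have "x powr (e - 1) \<le> m powr (e - 1)" using xm assms by (intro powr_mono2') auto
  thus "\<bar>e * x powr (e - 1)\<bar> \<le> \<bar>e\<bar> * m powr (e - 1)"
    by (simp add: abs_mult mult_left_mono)
qed auto

context psiw begin

declare meas0[measurable] meas1[measurable]

lemma G_int: assumes "0 < \<gamma>" "\<gamma> \<le> 1"
  shows "integrable lborel (\<lambda>s. pospow (y - s) \<gamma> * \<psi> s)"
proof (rule integrable_bdd_supp[where C="(\<bar>y\<bar> + R + 1) * B0" and a="-R" and b=R])
  fix s show "\<bar>pospow (y - s) \<gamma> * \<psi> s\<bar> \<le> (\<bar>y\<bar> + R + 1) * B0 * indicator {-R..R} s"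
  proof (cases "s \<in> {-R..R}")
    case True
    have "pospow (y - s) \<gamma> \<le> \<bar>y\<bar> + R + 1" using True assms R1 by (intro pospow_le) auto
    hence "pospow (y - s) \<gamma> * \<bar>\<psi> s\<bar> \<le> (\<bar>y\<bar> + R + 1) * B0"
      using B0[of s] pospow_nonneg R1 by (intro mult_mono) auto
    thus ?thesis using True by (simp add: abs_mult pospow_nonneg)
  next
    case False
    hence "R < \<bar>s\<bar>" by auto
    thus ?thesis using supp[of s] False by simp
  qed
qed measurable

lemma pospow_eq: assumes "R < y" shows "pospow (y - s) \<gamma> * \<psi> s = (y - s) powr \<gamma> * \<psi> s"
proof (cases "R < \<bar>s\<bar>")
  case True then show ?thesis using supp by simp
next
  case False then have "y - s > 0" using assms by auto
  then show ?thesis by (simp add: pospow_def)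
qed

lemma G_tail: assumes "0 < \<gamma>" "\<gamma> < 1" "2 * R \<le> y"
  shows "\<bar>G \<gamma> y\<bar> \<le> (8 * y powr (\<gamma> - 2)) * K0"
proof -
  have Ry: "R < y" using assms R1 by linarith
  have "G \<gamma> y = (\<integral>s. (y - s) powr \<gamma> * \<psi> s \<partial>lborel)"
  proof -
    have "(\<lambda>s. pospow (y - s) \<gamma> * \<psi> s) = (\<lambda>s. (y - s) powr \<gamma> * \<psi> s)"
      by (rule ext) (rule pospow_eq[OF Ry])
    thus ?thesis by (simp add: G_def)
  qed
  also have "\<bar>\<dots>\<bar> \<le> (8 * y powr (\<gamma> - 2)) * K0"
  proof (rule mom_bound[of "\<lambda>s. (y - s) powr \<gamma>" "\<lambda>s. - (\<gamma> * (y - s) powr (\<gamma> - 1))"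
        "\<lambda>s. \<gamma> * (\<gamma> - 1) * (y - s) powr (\<gamma> - 2)"])
    show "(\<lambda>s. (y - s) powr \<gamma>) \<in> borel_measurable borel" by measurable
  next
    fix x :: real assume x: "x \<in> {-R..R}"
    hence pos: "0 < y - x" using Ry by auto
    show "((\<lambda>s. (y - s) powr \<gamma>) has_real_derivative - (\<gamma> * (y - x) powr (\<gamma> - 1))) (at x)"
      using pos by (auto intro!: derivative_eq_intros)
    show "((\<lambda>s. - (\<gamma> * (y - s) powr (\<gamma> - 1))) has_real_derivative \<gamma> * (\<gamma> - 1) * (y - x) powr (\<gamma> - 2)) (at x)"
      using pos by (auto intro!: derivative_eq_intros simp: algebra_simps)
    have yx: "y / 2 \<le> y - x" using x assms by auto
    have "\<bar>\<gamma> * (\<gamma> - 1) * (y - x) powr (\<gamma> - 2)\<bar> \<le> 1 * (y - x) powr (\<gamma> - 2)"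
    proof -
      have g1: "\<bar>\<gamma> * (\<gamma> - 1)\<bar> \<le> 1"
      proof -
        have "\<gamma> * (1 - \<gamma>) \<le> 1 * 1" using assms by (intro mult_mono) auto
        moreover have "0 \<le> \<gamma> * (1 - \<gamma>)" using assms by simp
        ultimately show ?thesis by (simp add: abs_if algebra_simps)
      qed
      have "\<bar>(y - x) powr (\<gamma> - 2)\<bar> = (y - x) powr (\<gamma> - 2)" by simp
      thus ?thesis unfolding abs_mult[of "\<gamma> * (\<gamma> - 1)"]
        using mult_right_mono[OF g1, of "(y - x) powr (\<gamma> - 2)"] by simp
    qed
    also have "\<dots> \<le> (y / 2) powr (\<gamma> - 2)" using yx assms R1 by (simp add: powr_mono2')
    also have "\<dots> \<le> 2 ^ 3 * y powr (\<gamma> - 2)" using assms R1 by (intro powr_div_bound) auto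
    finally show "\<bar>\<gamma> * (\<gamma> - 1) * (y - x) powr (\<gamma> - 2)\<bar> \<le> 8 * y powr (\<gamma> - 2)" by simp
  qed
  finally show ?thesis .
qed

end


lemma gam_bd: assumes "0 < (\<gamma>::real)" "\<gamma> < 1" shows "\<bar>\<gamma> * (\<gamma> - 1)\<bar> \<le> 1"
proof -
  have "\<gamma> * (1 - \<gamma>) \<le> 1 * 1" using assms by (intro mult_mono) auto
  moreover have "0 \<le> \<gamma> * (1 - \<gamma>)" using assms by simp
  ultimately show ?thesis by (simp add: abs_if algebra_simps)
qed

context psiw begin

declare meas0[measurable] meas1[measurable]

lemma G_difftail: assumes g: "0 < \<gamma>" "\<gamma> < 1" and y: "2 * R \<le> y1" "2 * R \<le> y2"
  shows "\<bar>G \<gamma> y1 - G \<gamma> y2\<bar> \<le> (16 * \<bar>y1 - y2\<bar> * (min y1 y2) powr (\<gamma> - 3)) * K0"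
proof -
  define m where "m = min y1 y2"
  have m2: "2 * R \<le> m" using y by (simp add: m_def)
  have mpos: "0 < m" using m2 R1 by linarith
  have Ry1: "R < y1" and Ry2: "R < y2" using y R1 by linarith+
  have "G \<gamma> y1 - G \<gamma> y2 = (\<integral>s. pospow (y1 - s) \<gamma> * \<psi> s - pospow (y2 - s) \<gamma> * \<psi> s \<partial>lborel)"
    unfolding G_def using G_int[of \<gamma> y1] G_int[of \<gamma> y2] g by simp
  also have "(\<lambda>s. pospow (y1 - s) \<gamma> * \<psi> s - pospow (y2 - s) \<gamma> * \<psi> s)
      = (\<lambda>s. ((y1 - s) powr \<gamma> - (y2 - s) powr \<gamma>) * \<psi> s)"
    by (rule ext) (simp add: pospow_eq[OF Ry1] pospow_eq[OF Ry2] left_diff_distrib)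
  also have "\<bar>(\<integral>s. ((y1 - s) powr \<gamma> - (y2 - s) powr \<gamma>) * \<psi> s \<partial>lborel)\<bar>
      \<le> (16 * \<bar>y1 - y2\<bar> * m powr (\<gamma> - 3)) * K0"
  proof (rule mom_bound[of "\<lambda>s. (y1 - s) powr \<gamma> - (y2 - s) powr \<gamma>"
        "\<lambda>s. - (\<gamma> * (y1 - s) powr (\<gamma> - 1)) + \<gamma> * (y2 - s) powr (\<gamma> - 1)"
        "\<lambda>s. \<gamma> * (\<gamma> - 1) * ((y1 - s) powr (\<gamma> - 2) - (y2 - s) powr (\<gamma> - 2))"])
    show "(\<lambda>s. (y1 - s) powr \<gamma> - (y2 - s) powr \<gamma>) \<in> borel_measurable borel" by measurable
  next
    fix x :: real assume x: "x \<in> {-R..R}"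
    hence pos1: "0 < y1 - x" and pos2: "0 < y2 - x" using Ry1 Ry2 by auto
    show "((\<lambda>s. (y1 - s) powr \<gamma> - (y2 - s) powr \<gamma>) has_real_derivative
        - (\<gamma> * (y1 - x) powr (\<gamma> - 1)) + \<gamma> * (y2 - x) powr (\<gamma> - 1)) (at x)"
      using pos1 pos2 by (auto intro!: derivative_eq_intros)
    show "((\<lambda>s. - (\<gamma> * (y1 - s) powr (\<gamma> - 1)) + \<gamma> * (y2 - s) powr (\<gamma> - 1)) has_real_derivative
        \<gamma> * (\<gamma> - 1) * ((y1 - x) powr (\<gamma> - 2) - (y2 - x) powr (\<gamma> - 2))) (at x)"
      using pos1 pos2 by (auto intro!: derivative_eq_intros simp: algebra_simps)
    have ym1: "m / 2 \<le> y1 - x" and ym2: "m / 2 \<le> y2 - x" using x m2 by (auto simp: m_def)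
    have d: "\<bar>(y1 - x) powr (\<gamma> - 2) - (y2 - x) powr (\<gamma> - 2)\<bar>
        \<le> (\<bar>\<gamma> - 2\<bar> * (m / 2) powr (\<gamma> - 2 - 1)) * \<bar>(y1 - x) - (y2 - x)\<bar>"
      by (rule powr_diff_bound) (use ym1 ym2 mpos g in auto)
    have X: "\<bar>\<gamma> - 2\<bar> * (m / 2) powr (\<gamma> - 2 - 1) \<le> 2 * (2 ^ 3 * m powr (\<gamma> - 3))"
    proof (rule mult_mono)
      show "\<bar>\<gamma> - 2\<bar> \<le> 2" using g by auto
      have e: "\<gamma> - 2 - 1 = \<gamma> - 3" by simp
      show "(m / 2) powr (\<gamma> - 2 - 1) \<le> 2 ^ 3 * m powr (\<gamma> - 3)"
        unfolding e by (rule powr_div_bound) (use mpos g in auto)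
    qed auto
    have d2: "\<bar>(y1 - x) powr (\<gamma> - 2) - (y2 - x) powr (\<gamma> - 2)\<bar> \<le> 16 * \<bar>y1 - y2\<bar> * m powr (\<gamma> - 3)"
    proof -
      have "(\<bar>\<gamma> - 2\<bar> * (m / 2) powr (\<gamma> - 2 - 1)) * \<bar>y1 - y2\<bar> \<le> (2 * (2 ^ 3 * m powr (\<gamma> - 3))) * \<bar>y1 - y2\<bar>"
        by (rule mult_right_mono[OF X]) simp
      moreover have "\<bar>(y1 - x) - (y2 - x)\<bar> = \<bar>y1 - y2\<bar>" by simp
      ultimately show ?thesis using d by (simp add: mult_ac)
    qed
    have "\<bar>\<gamma> * (\<gamma> - 1) * ((y1 - x) powr (\<gamma> - 2) - (y2 - x) powr (\<gamma> - 2))\<bar>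
        \<le> 1 * \<bar>(y1 - x) powr (\<gamma> - 2) - (y2 - x) powr (\<gamma> - 2)\<bar>"
      unfolding abs_mult[of "\<gamma> * (\<gamma> - 1)"] by (rule mult_right_mono[OF gam_bd[OF g]]) simp
    thus "\<bar>\<gamma> * (\<gamma> - 1) * ((y1 - x) powr (\<gamma> - 2) - (y2 - x) powr (\<gamma> - 2))\<bar>
        \<le> 16 * \<bar>y1 - y2\<bar> * m powr (\<gamma> - 3)" using d2 by simp
  qed
  finally show ?thesis by (simp add: m_def)
qed

end


lemma low_bd:
  fixes x T e :: real
  assumes "1 \<le> x" "x \<le> T" "-2 \<le> e" "e \<le> 0"
  shows "1 \<le> T ^ 2 * x powr e"
proof -
  have "T powr (-2) \<le> T powr e" using assms by (intro powr_mono) auto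
  also have "\<dots> \<le> x powr e" using assms by (intro powr_mono2') auto
  finally have "T ^ 2 * T powr (-2) \<le> T ^ 2 * x powr e" by (intro mult_left_mono) auto
  moreover have "T ^ 2 * T powr (-2) = 1"
  proof -
    have "T powr (-2) = inverse (T powr 2)" by (simp add: powr_minus)
    moreover have "T powr 2 = T ^ 2" using assms by (simp add: powr_realpow[of T 2, simplified])
    ultimately show ?thesis using assms by simp
  qed
  ultimately show ?thesis by simp
qed

context psiw begin

lemma K0_nonneg: "0 \<le> K0" using B0_nonneg R1 by (simp add: K0_def)
lemma C0_nonneg: "0 \<le> C0" using B0_nonneg R1 by (simp add: C0_def)
lemma L0_nonneg: "0 \<le> L0" using B1_nonneg R1 by (simp add: L0_def)

definition "A0 = C0 * (3 * R + 3) ^ 2 + 64 * K0"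
definition "A1 = L0 * (3 * R + 3) ^ 2 + 432 * K0"

lemma G_decay: assumes g: "0 < \<gamma>" "\<gamma> < 1"
  shows "\<bar>G \<gamma> y\<bar> \<le> A0 * (1 + \<bar>y\<bar>) powr (\<gamma> - 2)"
proof -
  have pn: "0 \<le> (1 + \<bar>y\<bar>) powr (\<gamma> - 2)" by simp
  have A0n: "0 \<le> A0" using C0_nonneg K0_nonneg by (simp add: A0_def)
  consider "y \<le> -R" | "-R < y" "y \<le> 3 * R + 2" | "3 * R + 2 < y" by linarith
  then show ?thesis
  proof cases
    case 1 then show ?thesis using G_zero pn A0n by simp
  next
    case 2
    have "\<bar>G \<gamma> y\<bar> \<le> C0" using G_bdd 2 g by simp
    also have "\<dots> \<le> C0 * ((3 * R + 3) ^ 2 * (1 + \<bar>y\<bar>) powr (\<gamma> - 2))"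
    proof -
      have lb: "1 \<le> (3 * R + 3) ^ 2 * (1 + \<bar>y\<bar>) powr (\<gamma> - 2)"
        by (rule low_bd) (use 2 g R1 in auto)
      show ?thesis using mult_left_mono[OF lb C0_nonneg] by simp
    qed
    also have "\<dots> \<le> A0 * (1 + \<bar>y\<bar>) powr (\<gamma> - 2)"
      unfolding A0_def using pn K0_nonneg by (simp add: algebra_simps)
    finally show ?thesis .
  next
    case 3
    hence y2: "2 * R \<le> y" using R1 by linarith
    have yp: "0 < y" using y2 R1 by linarith
    have t1: "\<bar>G \<gamma> y\<bar> \<le> (8 * y powr (\<gamma> - 2)) * K0" by (rule G_tail[OF g y2])
    have "y powr (\<gamma> - 2) \<le> ((1 + y) / 2) powr (\<gamma> - 2)"
      using yp g 3 R1 by (intro powr_mono2') auto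
    also have "\<dots> \<le> 2 ^ 3 * (1 + y) powr (\<gamma> - 2)"
      using yp g by (intro powr_div_bound) auto
    finally have t2: "y powr (\<gamma> - 2) \<le> 8 * (1 + y) powr (\<gamma> - 2)" by simp
    have "(8 * y powr (\<gamma> - 2)) * K0 \<le> (8 * (8 * (1 + y) powr (\<gamma> - 2))) * K0"
      using t2 K0_nonneg by (intro mult_right_mono) auto
    with t1 have "\<bar>G \<gamma> y\<bar> \<le> 64 * K0 * (1 + \<bar>y\<bar>) powr (\<gamma> - 2)"
      using yp by (simp add: mult_ac)
    also have "\<dots> \<le> A0 * (1 + \<bar>y\<bar>) powr (\<gamma> - 2)"
      unfolding A0_def using pn C0_nonneg R1 by (intro mult_right_mono) auto
    finally show ?thesis .
  qed
qed

lemma G_diff_small: assumes g: "0 < \<gamma>" "\<gamma> < 1" and d: "\<bar>y1 - y2\<bar> \<le> 1"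
  shows "\<bar>G \<gamma> y1 - G \<gamma> y2\<bar> \<le> A1 * \<bar>y1 - y2\<bar> * (1 + \<bar>y1\<bar>) powr (\<gamma> - 2)"
proof -
  have pn: "0 \<le> (1 + \<bar>y1\<bar>) powr (\<gamma> - 2)" by simp
  have A1n: "0 \<le> A1" using L0_nonneg K0_nonneg by (simp add: A1_def)
  consider "y1 < -R - 1" | "-R - 1 \<le> y1" "max y1 y2 \<le> 3 * R + 2" | "3 * R + 2 < max y1 y2" by linarith
  then show ?thesis
  proof cases
    case 1
    hence "y1 \<le> -R" "y2 \<le> -R" using d by auto
    then show ?thesis using G_zero pn A1n by simp
  next
    case 2
    have "\<bar>G \<gamma> y1 - G \<gamma> y2\<bar> \<le> L0 * \<bar>y1 - y2\<bar>" using G_lip 2 g by simp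
    also have "\<dots> \<le> (L0 * \<bar>y1 - y2\<bar>) * ((3 * R + 3) ^ 2 * (1 + \<bar>y1\<bar>) powr (\<gamma> - 2))"
    proof -
      have lb: "1 \<le> (3 * R + 3) ^ 2 * (1 + \<bar>y1\<bar>) powr (\<gamma> - 2)"
        by (rule low_bd) (use 2 g R1 in auto)
      have "0 \<le> L0 * \<bar>y1 - y2\<bar>" using L0_nonneg by simp
      from mult_left_mono[OF lb this] show ?thesis by simp
    qed
    also have "\<dots> \<le> A1 * \<bar>y1 - y2\<bar> * (1 + \<bar>y1\<bar>) powr (\<gamma> - 2)"
      unfolding A1_def using pn K0_nonneg by (simp add: algebra_simps)
    finally show ?thesis .
  next
    case 3
    define m where "m = min y1 y2"
    have m3: "3 * R + 1 \<le> m" using 3 d by (auto simp: m_def)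
    have y12: "2 * R \<le> y1" "2 * R \<le> y2" using m3 R1 by (auto simp: m_def)
    have m1: "1 \<le> m" using m3 R1 by linarith
    have y1p: "0 < y1" using y12 R1 by linarith
    have t1: "\<bar>G \<gamma> y1 - G \<gamma> y2\<bar> \<le> (16 * \<bar>y1 - y2\<bar> * m powr (\<gamma> - 3)) * K0"
      using G_difftail[OF g y12] by (simp add: m_def)
    have "m powr (\<gamma> - 3) \<le> m powr (\<gamma> - 2)" using m1 by (intro powr_mono) auto
    also have "\<dots> \<le> ((1 + y1) / 3) powr (\<gamma> - 2)"
    proof (rule powr_mono2')
      show "(1 + y1) / 3 \<le> m" using d m3 R1 by (auto simp: m_def)
    qed (use g y1p in auto)
    also have "\<dots> \<le> 3 ^ 3 * (1 + y1) powr (\<gamma> - 2)"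
      using y1p g by (intro powr_div_bound) auto
    finally have t2: "m powr (\<gamma> - 3) \<le> 27 * (1 + y1) powr (\<gamma> - 2)" by simp
    have "(16 * \<bar>y1 - y2\<bar> * m powr (\<gamma> - 3)) * K0 \<le> (16 * \<bar>y1 - y2\<bar> * (27 * (1 + y1) powr (\<gamma> - 2))) * K0"
      using t2 K0_nonneg by (intro mult_right_mono mult_left_mono) auto
    with t1 have "\<bar>G \<gamma> y1 - G \<gamma> y2\<bar> \<le> (432 * K0) * \<bar>y1 - y2\<bar> * (1 + \<bar>y1\<bar>) powr (\<gamma> - 2)"
      using y1p by (simp add: mult_ac)
    also have "\<dots> \<le> A1 * \<bar>y1 - y2\<bar> * (1 + \<bar>y1\<bar>) powr (\<gamma> - 2)"
      unfolding A1_def using pn L0_nonneg R1 by (intro mult_right_mono) auto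
    finally show ?thesis .
  qed
qed

definition "AA = A0 + A1"

lemma G_Delta: assumes g: "0 < \<gamma>" "\<gamma> < 1"
  shows "\<bar>G \<gamma> y1 - G \<gamma> y2\<bar> \<le> AA * min 1 \<bar>y1 - y2\<bar> *
     ((1 + \<bar>y1\<bar>) powr (\<gamma> - 2) + (1 + \<bar>y2\<bar>) powr (\<gamma> - 2))"
proof (cases "\<bar>y1 - y2\<bar> \<le> 1")
  case True
  have A0n: "0 \<le> A0" using C0_nonneg K0_nonneg by (simp add: A0_def)
  have "\<bar>G \<gamma> y1 - G \<gamma> y2\<bar> \<le> A1 * \<bar>y1 - y2\<bar> * (1 + \<bar>y1\<bar>) powr (\<gamma> - 2)"
    by (rule G_diff_small[OF g True])
  also have "\<dots> \<le> AA * \<bar>y1 - y2\<bar> * ((1 + \<bar>y1\<bar>) powr (\<gamma> - 2) + (1 + \<bar>y2\<bar>) powr (\<gamma> - 2))"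
  proof -
    have A1n: "0 \<le> A1" using L0_nonneg K0_nonneg by (simp add: A1_def)
    show ?thesis unfolding AA_def using A0n A1n by (intro mult_mono) auto
  qed
  finally show ?thesis using True by simp
next
  case False
  have A1n: "0 \<le> A1" using L0_nonneg K0_nonneg by (simp add: A1_def)
  have "\<bar>G \<gamma> y1 - G \<gamma> y2\<bar> \<le> \<bar>G \<gamma> y1\<bar> + \<bar>G \<gamma> y2\<bar>" by simp
  also have "\<dots> \<le> A0 * (1 + \<bar>y1\<bar>) powr (\<gamma> - 2) + A0 * (1 + \<bar>y2\<bar>) powr (\<gamma> - 2)"
    using G_decay[OF g, of y1] G_decay[OF g, of y2] by simp
  also have "\<dots> \<le> AA * ((1 + \<bar>y1\<bar>) powr (\<gamma> - 2) + (1 + \<bar>y2\<bar>) powr (\<gamma> - 2))"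
    unfolding AA_def using A1n by (simp add: algebra_simps)
  finally show ?thesis using False by simp
qed

lemma AA_nonneg: "0 \<le> AA"
  using C0_nonneg K0_nonneg L0_nonneg by (simp add: AA_def A0_def A1_def)

end


lemma sum_nat_inj_bound:
  fixes g :: "nat \<Rightarrow> real" and \<phi> :: "int \<Rightarrow> nat"
  assumes "summable g" "\<And>n. 0 \<le> g n" "finite S" "inj_on \<phi> S"
  shows "(\<Sum>k\<in>S. g (\<phi> k)) \<le> suminf g"
proof -
  have "(\<Sum>k\<in>S. g (\<phi> k)) = sum g (\<phi> ` S)" using assms(4) by (simp add: sum.reindex)
  also have "\<dots> \<le> suminf g" using assms by (intro sum_le_suminf) auto
  finally show ?thesis .
qed

lemma sum_int_shift:
  fixes g :: "nat \<Rightarrow> real" and f :: "int \<Rightarrow> real"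
  assumes g: "summable g" "\<And>n. 0 \<le> g n" and S: "finite S"
    and f: "\<And>k. k \<in> S \<Longrightarrow> f k \<le> g (nat \<bar>k - m\<bar>)"
  shows "(\<Sum>k\<in>S. f k) \<le> 2 * suminf g"
proof -
  define S1 where "S1 = {k\<in>S. m \<le> k}"
  define S2 where "S2 = {k\<in>S. k < m}"
  have fin: "finite S1" "finite S2" using S by (auto simp: S1_def S2_def)
  have "(\<Sum>k\<in>S. f k) \<le> (\<Sum>k\<in>S. g (nat \<bar>k - m\<bar>))" using f by (rule sum_mono)
  also have "\<dots> = (\<Sum>k\<in>S1. g (nat \<bar>k - m\<bar>)) + (\<Sum>k\<in>S2. g (nat \<bar>k - m\<bar>))"
  proof -
    have "S = S1 \<union> S2" "S1 \<inter> S2 = {}" by (auto simp: S1_def S2_def)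
    thus ?thesis using fin by (simp add: sum.union_disjoint)
  qed
  also have "(\<Sum>k\<in>S1. g (nat \<bar>k - m\<bar>)) \<le> suminf g"
    by (rule sum_nat_inj_bound[OF g fin(1)]) (auto simp: S1_def inj_on_def)
  also have "(\<Sum>k\<in>S2. g (nat \<bar>k - m\<bar>)) \<le> suminf g"
    by (rule sum_nat_inj_bound[OF g fin(2)]) (auto simp: S2_def inj_on_def)
  finally show ?thesis by simp
qed

lemma summable_shift_powr:
  assumes "1 < s" shows "summable (\<lambda>n::nat. (1 + real n) powr (- s))"
proof -
  have "summable (\<lambda>n::nat. real n powr (- s))" using assms by (simp add: summable_real_powr_iff)
  hence "summable (\<lambda>n::nat. real (Suc n) powr (- s))" by (subst summable_Suc_iff)
  thus ?thesis by simp
qed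

definition Zc :: "real \<Rightarrow> real" where
  "Zc s = 2 * (2 powr s * (\<Sum>n. (1 + real n) powr (- s)))"

lemma Zsum:
  fixes y :: real
  assumes s: "1 < s" and S: "finite S"
  shows "(\<Sum>k\<in>S. (1 + \<bar>y - real_of_int k\<bar>) powr (- s)) \<le> Zc s"
proof -
  define m where "m = \<lfloor>y\<rfloor>"
  have sm: "summable (\<lambda>n. 2 powr s * (1 + real n) powr (- s))"
    using summable_shift_powr[OF s] by (rule summable_mult)
  have "(\<Sum>k\<in>S. (1 + \<bar>y - real_of_int k\<bar>) powr (- s)) \<le> 2 * (\<Sum>n. 2 powr s * (1 + real n) powr (- s))"
  proof (rule sum_int_shift[OF sm _ S, where m=m])
    fix k assume "k \<in> S"
    have ym: "real_of_int m \<le> y" "y < real_of_int m + 1" unfolding m_def by linarith+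
    have A: "\<bar>real_of_int k - real_of_int m\<bar> \<le> 2 * \<bar>y - real_of_int k\<bar> + 1" using ym by (auto simp: abs_if)
    have B: "real (nat \<bar>k - m\<bar>) = \<bar>real_of_int k - real_of_int m\<bar>" by simp
    have le: "(1 + real (nat \<bar>k - m\<bar>)) / 2 \<le> 1 + \<bar>y - real_of_int k\<bar>"
    proof -
      have gen: "(1 + X) / 2 \<le> 1 + Y" if "X \<le> 2 * Y + 1" for X Y :: real using that by (simp add: field_simps)
      show ?thesis unfolding B by (rule gen[OF A])
    qed
    have "(1 + \<bar>y - real_of_int k\<bar>) powr (- s) \<le> ((1 + real (nat \<bar>k - m\<bar>)) / 2) powr (- s)"
    proof (rule powr_mono2')
      show "- s \<le> 0" using s by simp
      have "0 \<le> real (nat \<bar>k - m\<bar>)" by (rule of_nat_0_le_iff)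
      thus "0 < (1 + real (nat \<bar>k - m\<bar>)) / 2" by (simp add: field_simps)
    qed (rule le)
    also have "\<dots> = 2 powr s * (1 + real (nat \<bar>k - m\<bar>)) powr (- s)"
    proof -
      have e1: "((1 + real (nat \<bar>k - m\<bar>)) / 2) powr (- s) = (1 + real (nat \<bar>k - m\<bar>)) powr (- s) / 2 powr (- s)"
        by (rule powr_divide)
      have e2: "(2::real) powr (- s) = inverse (2 powr s)" by (rule powr_minus)
      show ?thesis unfolding e1 e2 by (simp only: divide_inverse inverse_inverse_eq mult.commute)
    qed
    finally show "(1 + \<bar>y - real_of_int k\<bar>) powr (- s) \<le> 2 powr s * (1 + real (nat \<bar>k - m\<bar>)) powr (- s)" .
  qed simp
  also have "\<dots> = Zc s" unfolding Zc_def using summable_shift_powr[OF s] by (simp add: suminf_mult)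
  finally show ?thesis .
qed

lemma Zc_nonneg: assumes "1 < s" shows "0 \<le> Zc s"
proof -
  have "0 \<le> (\<Sum>n. (1 + real n) powr (- s))"
    by (rule suminf_nonneg[OF summable_shift_powr[OF assms]]) simp
  thus ?thesis unfolding Zc_def by simp
qed

lemma lin_exp:
  fixes c x :: real
  assumes "0 < c" "0 \<le> x"
  shows "3 + x \<le> (3 + 1 / (c * ln 2)) * 2 powr (c * x)"
proof -
  have l2: "0 < ln (2::real)" by simp
  have e: "2 powr (c * x) = exp (c * x * ln 2)" by (simp add: powr_def mult_ac)
  have "1 + c * x * ln 2 \<le> 2 powr (c * x)" unfolding e by (rule exp_ge_add_one_self)
  hence "x \<le> (2 powr (c * x) - 1) / (c * ln 2)" using assms l2 by (simp add: field_simps)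
  also have "\<dots> \<le> 2 powr (c * x) / (c * ln 2)" using assms l2 by (intro divide_right_mono) auto
  finally have "3 + x \<le> 3 + 2 powr (c * x) / (c * ln 2)" by simp
  also have "1 \<le> 2 powr (c * x)" using assms by (intro ge_one_powr_ge_zero) auto
  hence "3 \<le> 3 * 2 powr (c * x)" by simp
  hence "3 + 2 powr (c * x) / (c * ln 2) \<le> (3 + 1 / (c * ln 2)) * 2 powr (c * x)"
    by (simp add: algebra_simps)
  finally show ?thesis .
qed


lemma two_powr_pow: "((2::real) powr x) ^ n = 2 powr (x * real n)"
proof -
  have "(2 powr x) ^ n = (2 powr x) powr real n" by (simp add: powr_realpow)
  also have "\<dots> = 2 powr (x * real n)" by (rule powr_powr)
  finally show ?thesis .
qed

lemma summable_two_pow: assumes "0 < (c::real)" shows "summable (\<lambda>n. ((2::real) powr (- c)) ^ n)"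
proof (rule summable_geometric)
  have "1 < (2::real) powr c" using assms by simp
  hence "inverse (2 powr c) < (1::real)" by (rule inverse_less_1_iff[THEN iffD2, OF disjI2])
  thus "norm ((2::real) powr (- c)) < 1" by (simp add: powr_minus)
qed

lemma geo_int:
  fixes c :: real
  assumes c: "0 < c" and F: "finite F" and neg: "\<And>j. j \<in> F \<Longrightarrow> j \<le> 0"
  shows "(\<Sum>j\<in>F. 2 powr (real_of_int j * c)) \<le> 2 * (\<Sum>n. (2 powr (- c)) ^ n)"
proof (rule sum_int_shift[OF summable_two_pow[OF c] _ F, where m=0])
  fix j assume "j \<in> F"
  hence j: "j \<le> 0" by (rule neg)
  have "real (nat \<bar>j - 0\<bar>) = - real_of_int j" using j by simp
  hence "(2 powr (- c)) ^ nat \<bar>j - 0\<bar> = 2 powr (real_of_int j * c)"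
    by (simp add: two_powr_pow mult.commute)
  thus "2 powr (real_of_int j * c) \<le> (2 powr (- c)) ^ nat \<bar>j - 0\<bar>" by simp
qed simp

definition Qc :: "real \<Rightarrow> real \<Rightarrow> real" where
  "Qc g0 g1 = 2 * (\<Sum>n. (2 powr (- g0)) ^ n + 2 * (2 powr (- (1 - g1))) ^ n)"

lemma dyad_sum:
  fixes \<gamma> g0 g1 h :: real
  assumes g: "0 < g0" "g0 \<le> \<gamma>" "\<gamma> \<le> g1" "g1 < 1" and h: "0 < h" and F: "finite F"
  shows "(\<Sum>j\<in>F. 2 powr (- real_of_int j * \<gamma>) * min 1 (2 powr real_of_int j * h)) \<le> Qc g0 g1 * h powr \<gamma>"
proof -
  define a where "a = log 2 h"
  have ha: "h = 2 powr a" using h by (simp add: a_def)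
  define n0 where "n0 = \<lfloor>a\<rfloor>"
  have n0: "real_of_int n0 \<le> a" "a < real_of_int n0 + 1" unfolding n0_def by linarith+
  define g where "g n = (2 powr (- g0)) ^ n + 2 * (2 powr (- (1 - g1))) ^ n" for n
  have sg: "summable g" unfolding g_def
    using g by (intro summable_add summable_mult summable_two_pow) auto
  have gn: "0 \<le> g n" for n by (simp add: g_def)
  define \<rho> where "\<rho> t = 2 powr (- t * \<gamma>) * min 1 (2 powr t)" for t :: real
  have tm: "2 powr (- real_of_int j * \<gamma>) * min 1 (2 powr real_of_int j * h)
      = h powr \<gamma> * \<rho> (real_of_int j + a)" for j
  proof -
    have "2 powr real_of_int j * h = 2 powr (real_of_int j + a)" by (simp add: ha powr_add)
    moreover have "2 powr (- real_of_int j * \<gamma>) = h powr \<gamma> * 2 powr (- (real_of_int j + a) * \<gamma>)"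
      by (simp add: ha powr_powr powr_add[symmetric] algebra_simps)
    ultimately show ?thesis by (simp add: \<rho>_def)
  qed
  have rb: "\<rho> (real_of_int j + a) \<le> g (nat \<bar>j - (- n0)\<bar>)" for j
  proof -
    define t where "t = real_of_int j + a"
    define i where "i = j + n0"
    have ti: "real_of_int i \<le> t" "t < real_of_int i + 1" using n0 by (simp_all add: t_def i_def)
    show ?thesis
    proof (cases "0 \<le> t")
      case True
      have i0: "0 \<le> i" using ti True by linarith
      have "\<rho> t \<le> 2 powr (- t * \<gamma>) * 1" unfolding \<rho>_def by (intro mult_left_mono) auto
      also have "\<dots> \<le> 2 powr (- real_of_int i * g0)"
      proof -
        have "- t * \<gamma> \<le> - real_of_int i * g0"
        proof -
          have "real_of_int i * g0 \<le> t * g0" using ti g by (intro mult_right_mono) auto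
          also have "\<dots> \<le> t * \<gamma>" using True g by (intro mult_left_mono) auto
          finally show ?thesis by simp
        qed
        thus ?thesis by simp
      qed
      also have "\<dots> = (2 powr (- g0)) ^ nat \<bar>j - - n0\<bar>"
        using i0 by (simp add: two_powr_pow i_def algebra_simps)
      also have "\<dots> \<le> g (nat \<bar>j - - n0\<bar>)" by (simp add: g_def)
      finally show ?thesis by (simp add: t_def)
    next
      case False
      have i0: "i < 0" using ti False by linarith
      have "\<rho> t \<le> 2 powr (- t * \<gamma>) * 2 powr t" unfolding \<rho>_def by (intro mult_left_mono) auto
      also have "\<dots> = 2 powr (t * (1 - \<gamma>))" by (simp add: powr_add[symmetric] algebra_simps)
      also have "\<dots> \<le> 2 powr ((real_of_int i + 1) * (1 - g1))"
      proof -
        have "t * (1 - \<gamma>) \<le> t * (1 - g1)" using False g by (intro mult_left_mono_neg) auto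
        also have "\<dots> \<le> (real_of_int i + 1) * (1 - g1)" using ti g by (intro mult_right_mono) auto
        finally show ?thesis by simp
      qed
      also have "\<dots> = 2 powr (1 - g1) * 2 powr (real_of_int i * (1 - g1))"
        by (simp add: powr_add[symmetric] algebra_simps)
      also have "\<dots> \<le> 2 * 2 powr (real_of_int i * (1 - g1))"
      proof (rule mult_right_mono)
        have "2 powr (1 - g1) \<le> 2 powr 1" using g by (intro powr_mono) auto
        thus "2 powr (1 - g1) \<le> (2::real)" by simp
      qed simp
      also have "2 powr (real_of_int i * (1 - g1)) = (2 powr (- (1 - g1))) ^ nat \<bar>j - - n0\<bar>"
        using i0 by (simp add: two_powr_pow i_def algebra_simps)
      also have "2 * \<dots> \<le> g (nat \<bar>j - - n0\<bar>)" by (simp add: g_def)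
      finally show ?thesis by (simp add: t_def)
    qed
  qed
  have "(\<Sum>j\<in>F. 2 powr (- real_of_int j * \<gamma>) * min 1 (2 powr real_of_int j * h))
      = h powr \<gamma> * (\<Sum>j\<in>F. \<rho> (real_of_int j + a))" unfolding sum_distrib_left by (rule sum.cong[OF refl tm])
  also have "(\<Sum>j\<in>F. \<rho> (real_of_int j + a)) \<le> 2 * suminf g"
    by (rule sum_int_shift[OF sg gn F]) (rule rb)
  hence "h powr \<gamma> * (\<Sum>j\<in>F. \<rho> (real_of_int j + a)) \<le> h powr \<gamma> * (2 * suminf g)"
    by (intro mult_left_mono) auto
  finally show ?thesis by (simp add: Qc_def g_def[abs_def] mult.commute)
qed


definition Kw :: "real \<Rightarrow> real \<Rightarrow> real \<Rightarrow> real \<Rightarrow> real \<Rightarrow> real \<Rightarrow> real" where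
  "Kw C C' p \<delta> \<alpha> M = C * (3 + M) powr p * Zc (1 + \<delta>) * (3 + 1 / (\<delta> * ln 2))
     + C' * Zc (1 + \<delta>) + 3 * C * Zc (1 + \<delta>) * (3 + 1 / ((1 / \<alpha>) * ln 2))"

definition Wr :: "real \<Rightarrow> real \<Rightarrow> real \<Rightarrow> real \<Rightarrow> real \<Rightarrow> real \<Rightarrow> int \<Rightarrow> real" where
  "Wr C C' p \<delta> \<alpha> M j = Kw C C' p \<delta> \<alpha> M *
     (if j < 0 then 2 powr (- real_of_int j * \<delta>) else 2 powr (real_of_int j / \<alpha>))"

lemma powr_le_self1: "1 \<le> (x::real) \<Longrightarrow> 0 \<le> p \<Longrightarrow> p \<le> 1 \<Longrightarrow> x powr p \<le> x"
  using powr_mono[of p 1 x] by simp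

lemma row_bound:
  fixes \<epsilon> :: "int \<Rightarrow> int \<Rightarrow> real" and C C' p \<delta> \<alpha> M e u :: real
  assumes \<delta>: "0 < \<delta>" and p: "0 \<le> p" "p \<le> 1" and \<alpha>: "1 < \<alpha>" and M: "0 < M"
    and e: "e \<le> - (1 + \<delta>)" "p + e \<le> - (1 + \<delta>)"
    and C: "0 \<le> C" "0 \<le> C'"
    and E0: "\<And>j k. \<bar>\<epsilon> j k\<bar> \<le> C * (3 + \<bar>real_of_int j\<bar>) powr p * (3 + \<bar>real_of_int k\<bar>) powr p"
    and E1: "\<And>j k. 0 \<le> j \<Longrightarrow> \<bar>real_of_int k\<bar> * 2 powr (- real_of_int j) \<le> 2 * M \<Longrightarrow>
              \<bar>\<epsilon> j k\<bar> \<le> C' * 2 powr (real_of_int j / \<alpha>)"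
    and u: "\<bar>u\<bar> \<le> M" and S: "finite S"
  shows "(\<Sum>k\<in>S. \<bar>\<epsilon> j k\<bar> * (1 + \<bar>2 powr real_of_int j * u - real_of_int k\<bar>) powr e)
     \<le> Wr C C' p \<delta> \<alpha> M j"
proof -
  define y where "y = 2 powr real_of_int j * u"
  define s where "s = 1 + \<delta>"
  have s: "1 < s" using \<delta> by (simp add: s_def)
  define Z where "Z = Zc s"
  have Z0: "0 \<le> Z" unfolding Z_def by (rule Zc_nonneg[OF s])
  have ZS: "(\<Sum>k\<in>T. (1 + \<bar>y - real_of_int k\<bar>) powr (- s)) \<le> Z" if "finite T" for T
    unfolding Z_def by (rule Zsum[OF s that])
  have es: "(1 + \<bar>y - real_of_int k\<bar>) powr e \<le> (1 + \<bar>y - real_of_int k\<bar>) powr (- s)" for k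
    using e by (intro powr_mono) (auto simp: s_def)
  have pes: "(1 + \<bar>y - real_of_int k\<bar>) powr p * (1 + \<bar>y - real_of_int k\<bar>) powr e
      \<le> (1 + \<bar>y - real_of_int k\<bar>) powr (- s)" for k
  proof -
    have "(1 + \<bar>y - real_of_int k\<bar>) powr p * (1 + \<bar>y - real_of_int k\<bar>) powr e
        = (1 + \<bar>y - real_of_int k\<bar>) powr (p + e)" by (simp add: powr_add)
    also have "\<dots> \<le> (1 + \<bar>y - real_of_int k\<bar>) powr (- s)"
      using e by (intro powr_mono) (auto simp: s_def)
    finally show ?thesis .
  qed
  have Kw_def': "Kw C C' p \<delta> \<alpha> M = C * (3 + M) powr p * Z * (3 + 1 / (\<delta> * ln 2))
     + C' * Z + 3 * C * Z * (3 + 1 / ((1 / \<alpha>) * ln 2))" by (simp add: Kw_def Z_def s_def)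
  have l2: "0 < ln (2::real)" by simp
  have c1: "0 \<le> 3 + 1 / (\<delta> * ln 2)" using \<delta> l2 by (simp add: add_nonneg_nonneg)
  have c2: "0 \<le> 3 + 1 / ((1 / \<alpha>) * ln 2)" using \<alpha> l2 by (simp add: add_nonneg_nonneg)
  have t1: "0 \<le> C * (3 + M) powr p * Z * (3 + 1 / (\<delta> * ln 2))" using C Z0 c1 by simp
  have t2: "0 \<le> C' * Z" using C Z0 by simp
  have t3: "0 \<le> 3 * C * Z * (3 + 1 / ((1 / \<alpha>) * ln 2))" using C Z0 c2 by simp
  show ?thesis
  proof (cases "j < 0")
    case True
    have "2 powr real_of_int j \<le> 2 powr 0" using True by (intro powr_mono) auto
    hence yM: "\<bar>y\<bar> \<le> M" unfolding y_def using u
      by (simp add: abs_mult) (smt (verit) mult_left_le_one_le abs_ge_zero powr_ge_zero)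
    have bnd: "\<bar>\<epsilon> j k\<bar> * (1 + \<bar>y - real_of_int k\<bar>) powr e
        \<le> (C * (3 + \<bar>real_of_int j\<bar>) powr p * (3 + M) powr p) * (1 + \<bar>y - real_of_int k\<bar>) powr (- s)" for k
    proof -
      have kk: "3 + \<bar>real_of_int k\<bar> \<le> (3 + M) * (1 + \<bar>y - real_of_int k\<bar>)"
      proof -
        have "\<bar>real_of_int k\<bar> \<le> \<bar>y\<bar> + \<bar>y - real_of_int k\<bar>" by linarith
        moreover have "0 \<le> M * \<bar>y - real_of_int k\<bar>" using M by simp
        moreover have "(3 + M) * (1 + \<bar>y - real_of_int k\<bar>) = 3 + M + M * \<bar>y - real_of_int k\<bar> + 3 * \<bar>y - real_of_int k\<bar>"
          by (simp add: algebra_simps)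
        ultimately show ?thesis using yM abs_ge_zero[of "y - real_of_int k"] by linarith
      qed
      have "(3 + \<bar>real_of_int k\<bar>) powr p \<le> ((3 + M) * (1 + \<bar>y - real_of_int k\<bar>)) powr p"
        using kk p by (intro powr_mono2) auto
      also have "\<dots> = (3 + M) powr p * (1 + \<bar>y - real_of_int k\<bar>) powr p" by (rule powr_mult)
      finally have kp: "(3 + \<bar>real_of_int k\<bar>) powr p \<le> (3 + M) powr p * (1 + \<bar>y - real_of_int k\<bar>) powr p" .
      have "\<bar>\<epsilon> j k\<bar> * (1 + \<bar>y - real_of_int k\<bar>) powr e
          \<le> (C * (3 + \<bar>real_of_int j\<bar>) powr p * (3 + \<bar>real_of_int k\<bar>) powr p) * (1 + \<bar>y - real_of_int k\<bar>) powr e"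
        using E0[of j k] by (intro mult_right_mono) auto
      also have "\<dots> \<le> (C * (3 + \<bar>real_of_int j\<bar>) powr p * ((3 + M) powr p * (1 + \<bar>y - real_of_int k\<bar>) powr p))
            * (1 + \<bar>y - real_of_int k\<bar>) powr e"
        using kp C by (intro mult_right_mono mult_left_mono) auto
      also have "\<dots> = (C * (3 + \<bar>real_of_int j\<bar>) powr p * (3 + M) powr p)
            * ((1 + \<bar>y - real_of_int k\<bar>) powr p * (1 + \<bar>y - real_of_int k\<bar>) powr e)"
        by (simp add: mult_ac)
      also have "\<dots> \<le> (C * (3 + \<bar>real_of_int j\<bar>) powr p * (3 + M) powr p) * (1 + \<bar>y - real_of_int k\<bar>) powr (- s)"
        using pes C by (intro mult_left_mono) auto
      finally show ?thesis .
    qed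
    have "(\<Sum>k\<in>S. \<bar>\<epsilon> j k\<bar> * (1 + \<bar>y - real_of_int k\<bar>) powr e)
        \<le> (\<Sum>k\<in>S. (C * (3 + \<bar>real_of_int j\<bar>) powr p * (3 + M) powr p) * (1 + \<bar>y - real_of_int k\<bar>) powr (- s))"
      by (rule sum_mono) (rule bnd)
    also have "\<dots> = (C * (3 + \<bar>real_of_int j\<bar>) powr p * (3 + M) powr p) * (\<Sum>k\<in>S. (1 + \<bar>y - real_of_int k\<bar>) powr (- s))"
      by (simp add: sum_distrib_left)
    also have "\<dots> \<le> (C * (3 + \<bar>real_of_int j\<bar>) powr p * (3 + M) powr p) * Z"
      using ZS[OF S] C by (intro mult_left_mono) auto
    also have "\<dots> \<le> (C * ((3 + 1 / (\<delta> * ln 2)) * 2 powr (- real_of_int j * \<delta>)) * (3 + M) powr p) * Z"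
    proof -
      have "(3 + \<bar>real_of_int j\<bar>) powr p \<le> 3 + \<bar>real_of_int j\<bar>" using p by (intro powr_le_self1) auto
      also have "\<dots> \<le> (3 + 1 / (\<delta> * ln 2)) * 2 powr (\<delta> * \<bar>real_of_int j\<bar>)" using \<delta> by (intro lin_exp) auto
      also have "\<delta> * \<bar>real_of_int j\<bar> = - real_of_int j * \<delta>" using True by simp
      finally have "(3 + \<bar>real_of_int j\<bar>) powr p \<le> (3 + 1 / (\<delta> * ln 2)) * 2 powr (- real_of_int j * \<delta>)" .
      thus ?thesis using C Z0 by (intro mult_right_mono mult_left_mono) auto
    qed
    also have "\<dots> = (C * (3 + M) powr p * Z * (3 + 1 / (\<delta> * ln 2))) * 2 powr (- real_of_int j * \<delta>)"
      by (simp add: mult_ac)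
    also have "\<dots> \<le> Kw C C' p \<delta> \<alpha> M * 2 powr (- real_of_int j * \<delta>)"
      unfolding Kw_def' using t2 t3 by (intro mult_right_mono) auto
    finally show ?thesis using True by (simp add: Wr_def y_def)
  next
    case False
    hence j0: "0 \<le> j" by simp
    define Sn where "Sn = {k\<in>S. \<bar>real_of_int k\<bar> * 2 powr (- real_of_int j) \<le> 2 * M}"
    define Sf where "Sf = {k\<in>S. \<not> \<bar>real_of_int k\<bar> * 2 powr (- real_of_int j) \<le> 2 * M}"
    have fin: "finite Sn" "finite Sf" using S by (auto simp: Sn_def Sf_def)
    have split: "(\<Sum>k\<in>S. \<bar>\<epsilon> j k\<bar> * (1 + \<bar>y - real_of_int k\<bar>) powr e)
        = (\<Sum>k\<in>Sn. \<bar>\<epsilon> j k\<bar> * (1 + \<bar>y - real_of_int k\<bar>) powr e)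
        + (\<Sum>k\<in>Sf. \<bar>\<epsilon> j k\<bar> * (1 + \<bar>y - real_of_int k\<bar>) powr e)"
    proof -
      have "S = Sn \<union> Sf" "Sn \<inter> Sf = {}" by (auto simp: Sn_def Sf_def)
      thus ?thesis using fin by (simp add: sum.union_disjoint)
    qed
    have near: "(\<Sum>k\<in>Sn. \<bar>\<epsilon> j k\<bar> * (1 + \<bar>y - real_of_int k\<bar>) powr e)
        \<le> (C' * Z) * 2 powr (real_of_int j / \<alpha>)"
    proof -
      have "(\<Sum>k\<in>Sn. \<bar>\<epsilon> j k\<bar> * (1 + \<bar>y - real_of_int k\<bar>) powr e)
          \<le> (\<Sum>k\<in>Sn. (C' * 2 powr (real_of_int j / \<alpha>)) * (1 + \<bar>y - real_of_int k\<bar>) powr (- s))"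
      proof (rule sum_mono)
        fix k assume "k \<in> Sn"
        hence "\<bar>\<epsilon> j k\<bar> \<le> C' * 2 powr (real_of_int j / \<alpha>)" using E1 j0 by (simp add: Sn_def)
        thus "\<bar>\<epsilon> j k\<bar> * (1 + \<bar>y - real_of_int k\<bar>) powr e \<le> (C' * 2 powr (real_of_int j / \<alpha>)) * (1 + \<bar>y - real_of_int k\<bar>) powr (- s)"
          using es[of k] by (intro mult_mono) auto
      qed
      also have "\<dots> = (C' * 2 powr (real_of_int j / \<alpha>)) * (\<Sum>k\<in>Sn. (1 + \<bar>y - real_of_int k\<bar>) powr (- s))"
        by (simp add: sum_distrib_left)
      also have "\<dots> \<le> (C' * 2 powr (real_of_int j / \<alpha>)) * Z"
        using ZS[OF fin(1)] C by (intro mult_left_mono) auto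
      finally show ?thesis by (simp add: mult_ac)
    qed
    have far: "(\<Sum>k\<in>Sf. \<bar>\<epsilon> j k\<bar> * (1 + \<bar>y - real_of_int k\<bar>) powr e)
        \<le> (3 * C * Z * (3 + 1 / ((1 / \<alpha>) * ln 2))) * 2 powr (real_of_int j / \<alpha>)"
    proof -
      have jb: "(3 + \<bar>real_of_int j\<bar>) powr p \<le> (3 + 1 / ((1 / \<alpha>) * ln 2)) * 2 powr (real_of_int j / \<alpha>)"
      proof -
        have "(3 + \<bar>real_of_int j\<bar>) powr p \<le> 3 + \<bar>real_of_int j\<bar>" using p by (intro powr_le_self1) auto
        also have "\<dots> \<le> (3 + 1 / ((1 / \<alpha>) * ln 2)) * 2 powr ((1 / \<alpha>) * \<bar>real_of_int j\<bar>)"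
          using \<alpha> by (intro lin_exp) auto
        also have "(1 / \<alpha>) * \<bar>real_of_int j\<bar> = real_of_int j / \<alpha>" using j0 by simp
        finally show ?thesis .
      qed
      have "(\<Sum>k\<in>Sf. \<bar>\<epsilon> j k\<bar> * (1 + \<bar>y - real_of_int k\<bar>) powr e)
          \<le> (\<Sum>k\<in>Sf. (3 * C * (3 + \<bar>real_of_int j\<bar>) powr p) * (1 + \<bar>y - real_of_int k\<bar>) powr (- s))"
      proof (rule sum_mono)
        fix k assume kf: "k \<in> Sf"
        have yb: "\<bar>y\<bar> \<le> 2 powr real_of_int j * M" unfolding y_def using u
          by (simp add: abs_mult mult_left_mono)
        have "2 * M < \<bar>real_of_int k\<bar> * 2 powr (- real_of_int j)" using kf by (simp add: Sf_def)
        hence "2 * M * 2 powr real_of_int j < \<bar>real_of_int k\<bar>"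
          by (simp add: powr_minus field_simps)
        hence k2: "2 * \<bar>y\<bar> < \<bar>real_of_int k\<bar>" using yb by (simp add: mult_ac)
        have kk: "3 + \<bar>real_of_int k\<bar> \<le> 3 * (1 + \<bar>y - real_of_int k\<bar>)"
        proof -
          have "\<bar>real_of_int k\<bar> \<le> \<bar>y\<bar> + \<bar>y - real_of_int k\<bar>" by linarith
          moreover have "3 * (1 + \<bar>y - real_of_int k\<bar>) = 3 + 3 * \<bar>y - real_of_int k\<bar>" by simp
          ultimately show ?thesis using k2 abs_ge_zero[of "y - real_of_int k"] by linarith
        qed
        have "(3 + \<bar>real_of_int k\<bar>) powr p \<le> (3 * (1 + \<bar>y - real_of_int k\<bar>)) powr p"
          using kk p by (intro powr_mono2) auto
        also have "\<dots> = 3 powr p * (1 + \<bar>y - real_of_int k\<bar>) powr p" by (rule powr_mult)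
        also have "\<dots> \<le> 3 * (1 + \<bar>y - real_of_int k\<bar>) powr p"
          using powr_le_self1[of 3 p] p by (intro mult_right_mono) auto
        finally have kp: "(3 + \<bar>real_of_int k\<bar>) powr p \<le> 3 * (1 + \<bar>y - real_of_int k\<bar>) powr p" .
        have "\<bar>\<epsilon> j k\<bar> * (1 + \<bar>y - real_of_int k\<bar>) powr e
            \<le> (C * (3 + \<bar>real_of_int j\<bar>) powr p * (3 + \<bar>real_of_int k\<bar>) powr p) * (1 + \<bar>y - real_of_int k\<bar>) powr e"
          using E0[of j k] by (intro mult_right_mono) auto
        also have "\<dots> \<le> (C * (3 + \<bar>real_of_int j\<bar>) powr p * (3 * (1 + \<bar>y - real_of_int k\<bar>) powr p))
              * (1 + \<bar>y - real_of_int k\<bar>) powr e"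
          using kp C by (intro mult_right_mono mult_left_mono) auto
        also have "\<dots> = (3 * C * (3 + \<bar>real_of_int j\<bar>) powr p)
              * ((1 + \<bar>y - real_of_int k\<bar>) powr p * (1 + \<bar>y - real_of_int k\<bar>) powr e)"
          by (simp add: mult_ac)
        also have "\<dots> \<le> (3 * C * (3 + \<bar>real_of_int j\<bar>) powr p) * (1 + \<bar>y - real_of_int k\<bar>) powr (- s)"
          using pes C by (intro mult_left_mono) auto
        finally show "\<bar>\<epsilon> j k\<bar> * (1 + \<bar>y - real_of_int k\<bar>) powr e
            \<le> (3 * C * (3 + \<bar>real_of_int j\<bar>) powr p) * (1 + \<bar>y - real_of_int k\<bar>) powr (- s)" .
      qed
      also have "\<dots> = (3 * C * (3 + \<bar>real_of_int j\<bar>) powr p) * (\<Sum>k\<in>Sf. (1 + \<bar>y - real_of_int k\<bar>) powr (- s))"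
        by (simp add: sum_distrib_left)
      also have "\<dots> \<le> (3 * C * (3 + \<bar>real_of_int j\<bar>) powr p) * Z"
        using ZS[OF fin(2)] C by (intro mult_left_mono) auto
      also have "\<dots> \<le> (3 * C * ((3 + 1 / ((1 / \<alpha>) * ln 2)) * 2 powr (real_of_int j / \<alpha>))) * Z"
        using jb C Z0 by (intro mult_right_mono mult_left_mono) auto
      finally show ?thesis by (simp only: mult_ac)
    qed
    have "(\<Sum>k\<in>S. \<bar>\<epsilon> j k\<bar> * (1 + \<bar>y - real_of_int k\<bar>) powr e)
        \<le> (C' * Z + 3 * C * Z * (3 + 1 / ((1 / \<alpha>) * ln 2))) * 2 powr (real_of_int j / \<alpha>)"
      unfolding split using near far by (simp add: algebra_simps)
    also have "\<dots> \<le> Kw C C' p \<delta> \<alpha> M * 2 powr (real_of_int j / \<alpha>)"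
      unfolding Kw_def' using t1 by (intro mult_right_mono) auto
    finally show ?thesis using False by (simp add: Wr_def y_def)
  qed
qed


lemma h_le_hgam:
  fixes h \<gamma> M :: real
  assumes "0 < h" "h \<le> 2 * M" "0 < \<gamma>" "\<gamma> < 1"
  shows "h \<le> max 1 (2 * M) * h powr \<gamma>"
proof -
  have "h = h powr \<gamma> * h powr (1 - \<gamma>)" using assms by (simp add: powr_add[symmetric])
  also have "h powr (1 - \<gamma>) \<le> max 1 (2 * M)"
  proof (cases "1 \<le> 2 * M")
    case True
    have "h powr (1 - \<gamma>) \<le> (2 * M) powr (1 - \<gamma>)" using assms by (intro powr_mono2) auto
    also have "\<dots> \<le> (2 * M) powr 1" using True assms by (intro powr_mono) auto
    finally show ?thesis using True by simp
  next
    case False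
    have "h powr (1 - \<gamma>) \<le> 1 powr (1 - \<gamma>)" using assms False by (intro powr_mono2) auto
    thus ?thesis by simp
  qed
  hence "h powr \<gamma> * h powr (1 - \<gamma>) \<le> h powr \<gamma> * max 1 (2 * M)" by (intro mult_left_mono) auto
  finally show ?thesis by (simp add: mult.commute)
qed

definition Cfin :: "real \<Rightarrow> real \<Rightarrow> real \<Rightarrow> real \<Rightarrow> real \<Rightarrow> real \<Rightarrow> real \<Rightarrow> real" where
  "Cfin AA C C' \<alpha> a b M = AA * 2 * Kw C C' (1 / \<alpha> + (1 - b) / 2) ((1 - b) / 2) \<alpha> M *
     (Qc (a - 1 / \<alpha>) (b - 1 / \<alpha>) + 2 * (\<Sum>n. (2 powr (- ((1 - b) / 2))) ^ n) * max 1 (2 * M))"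

lemma total_bound:
  fixes \<epsilon> T :: "int \<Rightarrow> int \<Rightarrow> real" and C C' \<alpha> a b v M u1 u2 AA :: real
  assumes \<alpha>: "1 < \<alpha>" and ab: "1 / \<alpha> < a" "a \<le> v" "v \<le> b" "b < 1" and M: "0 < M"
    and C: "0 \<le> C" "0 \<le> C'" and AA: "0 \<le> AA"
    and E0: "\<And>j k. \<bar>\<epsilon> j k\<bar> \<le> C * (3 + \<bar>real_of_int j\<bar>) powr (1 / \<alpha> + (1 - b) / 2) * (3 + \<bar>real_of_int k\<bar>) powr (1 / \<alpha> + (1 - b) / 2)"
    and E1: "\<And>j k. 0 \<le> j \<Longrightarrow> \<bar>real_of_int k\<bar> * 2 powr (- real_of_int j) \<le> 2 * M \<Longrightarrow>
              \<bar>\<epsilon> j k\<bar> \<le> C' * 2 powr (real_of_int j / \<alpha>)"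
    and u: "\<bar>u1\<bar> \<le> M" "\<bar>u2\<bar> \<le> M" "u1 \<noteq> u2"
    and T: "\<And>j k. \<bar>T j k\<bar> \<le> 2 powr (- real_of_int j * v) * \<bar>\<epsilon> j k\<bar> * (AA * min 1 \<bar>2 powr real_of_int j * u1 - 2 powr real_of_int j * u2\<bar> *
        ((1 + \<bar>2 powr real_of_int j * u1 - real_of_int k\<bar>) powr (v - 1 / \<alpha> - 2)
       + (1 + \<bar>2 powr real_of_int j * u2 - real_of_int k\<bar>) powr (v - 1 / \<alpha> - 2)))"
    and F: "finite F"
  shows "(\<Sum>x\<in>F. \<bar>T (fst x) (snd x)\<bar>) \<le> Cfin AA C C' \<alpha> a b M * \<bar>u1 - u2\<bar> powr (v - 1 / \<alpha>)"
proof -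
  define \<delta> where "\<delta> = (1 - b) / 2"
  define p where "p = 1 / \<alpha> + \<delta>"
  define \<gamma> where "\<gamma> = v - 1 / \<alpha>"
  define h where "h = \<bar>u1 - u2\<bar>"
  define K where "K = Kw C C' p \<delta> \<alpha> M"
  have \<delta>0: "0 < \<delta>" using ab by (simp add: \<delta>_def)
  have ia: "0 < 1 / \<alpha>" "1 / \<alpha> < 1" using \<alpha> by auto
  have hb: "(1 - b) / 2 = 1 / 2 - b / 2" by simp
  have p2: "2 * p = 2 * (1 / \<alpha>) + (1 - b)" by (simp add: p_def \<delta>_def field_simps)
  have p: "0 \<le> p" "p \<le> 1" using ia ab p2 by linarith+
  have g: "0 < \<gamma>" "\<gamma> < 1" unfolding \<gamma>_def using ab ia(1) by linarith+
  have h0: "0 < h" using u by (simp add: h_def)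
  have h2: "h \<le> 2 * M" using u by (simp add: h_def)
  have d2: "2 * \<delta> = 1 - b" by (simp add: \<delta>_def)
  have e1: "\<gamma> - 2 \<le> - (1 + \<delta>)" unfolding \<gamma>_def using ab ia(1) d2 \<delta>0 by linarith
  have e2: "p + (\<gamma> - 2) \<le> - (1 + \<delta>)" unfolding \<gamma>_def p_def using ab ia(1) d2 by linarith
  have E0': "\<And>j k. \<bar>\<epsilon> j k\<bar> \<le> C * (3 + \<bar>real_of_int j\<bar>) powr p * (3 + \<bar>real_of_int k\<bar>) powr p"
    using E0 by (simp add: p_def \<delta>_def)
  note RB = row_bound[OF \<delta>0 p \<alpha> M e1 e2 C E0']
  have K0: "0 \<le> K"
  proof -
    have "0 \<le> Wr C C' p \<delta> \<alpha> M 0"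
      using RB[of 0 "{}" 0] E1 M by simp
    thus ?thesis by (simp add: Wr_def K_def)
  qed
  define Wj where "Wj j = (if j < 0 then 2 powr (- real_of_int j * \<delta>) else 2 powr (real_of_int j / \<alpha>))" for j :: int
  have Wr_eq: "Wr C C' p \<delta> \<alpha> M j = K * Wj j" for j by (simp add: Wr_def K_def Wj_def)
  define J where "J = fst ` F"
  define KK where "KK = snd ` F"
  have finJ: "finite J" "finite KK" using F by (auto simp: J_def KK_def)
  define f where "f j = 2 powr (- real_of_int j * v) * min 1 (2 powr real_of_int j * h) * (AA * 2 * K * Wj j)" for j
  have rowsum: "(\<Sum>k\<in>KK. \<bar>T j k\<bar>) \<le> f j" for j
  proof -
    define m where "m = min 1 \<bar>2 powr real_of_int j * u1 - 2 powr real_of_int j * u2\<bar>"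
    have mh: "m = min 1 (2 powr real_of_int j * h)"
      by (simp add: m_def h_def right_diff_distrib[symmetric] abs_mult)
    have m0: "0 \<le> m" by (simp add: m_def)
    define c where "c = 2 powr (- real_of_int j * v) * AA * m"
    have c0: "0 \<le> c" using AA m0 by (simp add: c_def)
    have "(\<Sum>k\<in>KK. \<bar>T j k\<bar>) \<le> (\<Sum>k\<in>KK. c * (\<bar>\<epsilon> j k\<bar> * (1 + \<bar>2 powr real_of_int j * u1 - real_of_int k\<bar>) powr (\<gamma> - 2))
        + c * (\<bar>\<epsilon> j k\<bar> * (1 + \<bar>2 powr real_of_int j * u2 - real_of_int k\<bar>) powr (\<gamma> - 2)))"
    proof (rule sum_mono)
      fix k show "\<bar>T j k\<bar> \<le> c * (\<bar>\<epsilon> j k\<bar> * (1 + \<bar>2 powr real_of_int j * u1 - real_of_int k\<bar>) powr (\<gamma> - 2))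
        + c * (\<bar>\<epsilon> j k\<bar> * (1 + \<bar>2 powr real_of_int j * u2 - real_of_int k\<bar>) powr (\<gamma> - 2))"
        using T[of j k] by (simp add: c_def m_def \<gamma>_def algebra_simps)
    qed
    also have "\<dots> = c * (\<Sum>k\<in>KK. \<bar>\<epsilon> j k\<bar> * (1 + \<bar>2 powr real_of_int j * u1 - real_of_int k\<bar>) powr (\<gamma> - 2))
        + c * (\<Sum>k\<in>KK. \<bar>\<epsilon> j k\<bar> * (1 + \<bar>2 powr real_of_int j * u2 - real_of_int k\<bar>) powr (\<gamma> - 2))"
      by (simp add: sum.distrib sum_distrib_left)
    also have "\<dots> \<le> c * (K * Wj j) + c * (K * Wj j)"
    proof (intro add_mono mult_left_mono c0)
      show "(\<Sum>k\<in>KK. \<bar>\<epsilon> j k\<bar> * (1 + \<bar>2 powr real_of_int j * u1 - real_of_int k\<bar>) powr (\<gamma> - 2)) \<le> K * Wj j"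
        using RB[of u1 KK j] E1 u(1) finJ(2) by (simp add: Wr_eq)
      show "(\<Sum>k\<in>KK. \<bar>\<epsilon> j k\<bar> * (1 + \<bar>2 powr real_of_int j * u2 - real_of_int k\<bar>) powr (\<gamma> - 2)) \<le> K * Wj j"
        using RB[of u2 KK j] E1 u(2) finJ(2) by (simp add: Wr_eq)
    qed
    also have "\<dots> = f j" by (simp add: f_def c_def mh algebra_simps)
    finally show ?thesis .
  qed
  have "(\<Sum>x\<in>F. \<bar>T (fst x) (snd x)\<bar>) \<le> (\<Sum>x\<in>J \<times> KK. \<bar>T (fst x) (snd x)\<bar>)"
  proof (rule sum_mono2)
    show "F \<subseteq> J \<times> KK"
    proof
      fix x assume "x \<in> F"
      hence "fst x \<in> J" "snd x \<in> KK" unfolding J_def KK_def by auto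
      thus "x \<in> J \<times> KK" by (cases x) auto
    qed
  qed (use finJ in auto)
  also have "\<dots> = (\<Sum>j\<in>J. \<Sum>k\<in>KK. \<bar>T j k\<bar>)"
    by (simp add: sum.cartesian_product case_prod_beta)
  also have "\<dots> \<le> (\<Sum>j\<in>J. f j)" by (rule sum_mono) (rule rowsum)
  also have "\<dots> = (\<Sum>j\<in>J \<inter> {j. j < 0}. f j) + (\<Sum>j\<in>J - {j. j < 0}. f j)"
    by (rule sum.Int_Diff[OF finJ(1)])
  finally have Stot: "(\<Sum>x\<in>F. \<bar>T (fst x) (snd x)\<bar>) \<le> (\<Sum>j\<in>J \<inter> {j. j < 0}. f j) + (\<Sum>j\<in>J - {j. j < 0}. f j)" .
  have Sneg: "(\<Sum>j\<in>J \<inter> {j. j < 0}. f j) \<le> (AA * 2 * K) * h * (2 * (\<Sum>n. (2 powr (- \<delta>)) ^ n))"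
  proof -
    have "(\<Sum>j\<in>J \<inter> {j. j < 0}. f j) \<le> (\<Sum>j\<in>J \<inter> {j. j < 0}. (AA * 2 * K) * h * 2 powr (real_of_int j * \<delta>))"
    proof (rule sum_mono)
      fix j assume "j \<in> J \<inter> {j. j < 0}"
      hence j: "j < 0" by simp
      have "2 powr (- real_of_int j * v) * min 1 (2 powr real_of_int j * h) * 2 powr (- real_of_int j * \<delta>)
          \<le> 2 powr (- real_of_int j * v) * (2 powr real_of_int j * h) * 2 powr (- real_of_int j * \<delta>)"
        by (intro mult_right_mono mult_left_mono) auto
      also have "\<dots> = h * 2 powr (real_of_int j * (1 - v - \<delta>))"
        by (simp add: powr_add[symmetric] algebra_simps)
      also have "\<dots> \<le> h * 2 powr (real_of_int j * \<delta>)"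
      proof -
        have "real_of_int j * (1 - v - \<delta>) \<le> real_of_int j * \<delta>"
        proof (rule mult_left_mono_neg)
          show "\<delta> \<le> 1 - v - \<delta>" using ab d2 by linarith
          show "real_of_int j \<le> 0" using j by simp
        qed
        thus ?thesis using h0 by (intro mult_left_mono) auto
      qed
      finally have "2 powr (- real_of_int j * v) * min 1 (2 powr real_of_int j * h) * 2 powr (- real_of_int j * \<delta>)
          \<le> h * 2 powr (real_of_int j * \<delta>)" .
      hence "(AA * 2 * K) * (2 powr (- real_of_int j * v) * min 1 (2 powr real_of_int j * h) * 2 powr (- real_of_int j * \<delta>))
          \<le> (AA * 2 * K) * (h * 2 powr (real_of_int j * \<delta>))"
        using AA K0 by (intro mult_left_mono) auto
      thus "f j \<le> (AA * 2 * K) * h * 2 powr (real_of_int j * \<delta>)"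
        using j by (simp add: f_def Wj_def mult_ac)
    qed
    also have "\<dots> = (AA * 2 * K) * h * (\<Sum>j\<in>J \<inter> {j. j < 0}. 2 powr (real_of_int j * \<delta>))"
      by (simp add: sum_distrib_left)
    also have "\<dots> \<le> (AA * 2 * K) * h * (2 * (\<Sum>n. (2 powr (- \<delta>)) ^ n))"
      using AA K0 h0 by (intro mult_left_mono geo_int[OF \<delta>0]) (auto simp: finJ)
    finally show ?thesis .
  qed
  have Spos: "(\<Sum>j\<in>J - {j. j < 0}. f j) \<le> (AA * 2 * K) * (Qc (a - 1 / \<alpha>) (b - 1 / \<alpha>) * h powr \<gamma>)"
  proof -
    have "(\<Sum>j\<in>J - {j. j < 0}. f j) = (AA * 2 * K) *
        (\<Sum>j\<in>J - {j. j < 0}. 2 powr (- real_of_int j * \<gamma>) * min 1 (2 powr real_of_int j * h))"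
      unfolding sum_distrib_left
    proof (rule sum.cong[OF refl])
      fix j assume "j \<in> J - {j. j < 0}"
      hence "\<not> j < 0" by simp
      moreover have "2 powr (- real_of_int j * v) * 2 powr (real_of_int j / \<alpha>) = 2 powr (- real_of_int j * \<gamma>)"
        by (simp add: powr_add[symmetric] \<gamma>_def algebra_simps)
      ultimately show "f j = AA * 2 * K * (2 powr (- real_of_int j * \<gamma>) * min 1 (2 powr real_of_int j * h))"
        by (simp add: f_def Wj_def mult_ac)
    qed
    also have "\<dots> \<le> (AA * 2 * K) * (Qc (a - 1 / \<alpha>) (b - 1 / \<alpha>) * h powr \<gamma>)"
    proof (rule mult_left_mono)
      have g01: "0 < a - 1 / \<alpha>" "a - 1 / \<alpha> \<le> \<gamma>" "\<gamma> \<le> b - 1 / \<alpha>" "b - 1 / \<alpha> < 1"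
        unfolding \<gamma>_def using ab ia(1) by linarith+
      show "(\<Sum>j\<in>J - {j. j < 0}. 2 powr (- real_of_int j * \<gamma>) * min 1 (2 powr real_of_int j * h))
          \<le> Qc (a - 1 / \<alpha>) (b - 1 / \<alpha>) * h powr \<gamma>"
        by (rule dyad_sum[OF g01 h0]) (use finJ in auto)
      show "0 \<le> AA * 2 * K" using AA K0 by simp
    qed
    finally show ?thesis .
  qed
  have "(\<Sum>x\<in>F. \<bar>T (fst x) (snd x)\<bar>) \<le> (AA * 2 * K) * h * (2 * (\<Sum>n. (2 powr (- \<delta>)) ^ n))
      + (AA * 2 * K) * (Qc (a - 1 / \<alpha>) (b - 1 / \<alpha>) * h powr \<gamma>)" using Stot Sneg Spos by linarith
  also have "(AA * 2 * K) * h * (2 * (\<Sum>n. (2 powr (- \<delta>)) ^ n))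
      \<le> (AA * 2 * K) * (max 1 (2 * M) * h powr \<gamma>) * (2 * (\<Sum>n. (2 powr (- \<delta>)) ^ n))"
  proof -
    have "0 \<le> (\<Sum>n. (2 powr (- \<delta>)) ^ n)"
      by (rule suminf_nonneg[OF summable_two_pow[OF \<delta>0]]) simp
    thus ?thesis using AA K0 h_le_hgam[OF h0 h2 g]
      by (intro mult_right_mono mult_left_mono) auto
  qed
  finally show ?thesis
    by (simp add: Cfin_def K_def p_def \<delta>_def \<gamma>_def h_def algebra_simps)
qed


lemma fin_bound_summable:
  fixes f :: "'a \<Rightarrow> real"
  assumes fb: "\<And>F. finite F \<Longrightarrow> (\<Sum>x\<in>F. \<bar>f x\<bar>) \<le> B"
  shows "f summable_on UNIV" "\<bar>infsum f UNIV\<bar> \<le> B"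
proof -
  have sa: "(\<lambda>x. norm (f x)) summable_on UNIV"
  proof (rule nonneg_bdd_above_summable_on)
    show "bdd_above (sum (\<lambda>x. norm (f x)) ` {F. F \<subseteq> UNIV \<and> finite F})"
      using fb by (auto intro!: bdd_aboveI[where M=B])
  qed simp
  thus s: "f summable_on UNIV" using summable_on_iff_abs_summable_on_real by blast
  have "norm (infsum f UNIV) \<le> infsum (\<lambda>x. norm (f x)) UNIV"
    by (rule norm_infsum_bound) (use sa in simp)
  also have "\<dots> \<le> B" using sa fb by (intro infsum_le_finite_sums) auto
  finally show "\<bar>infsum f UNIV\<bar> \<le> B" by simp
qed

theorem mainTheorem4:
  fixes P :: "'w measure"
    and \<alpha> :: real
    and \<psi> :: "real \<Rightarrow> real"
    and \<epsilon> :: "int \<Rightarrow> int \<Rightarrow> 'w \<Rightarrow> real"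
    and \<Omega>0 \<Omega>1 :: "'w set"
    and \<omega> :: 'w
    and M a b :: real
  assumes prob: "prob_space P"
    and alpha: "1 < \<alpha>" "\<alpha> < 2"
    and psi_C3: "C3 \<psi>"
    and psi_supp: "bounded {x. \<psi> x \<noteq> 0}"
    and psi_ONB: "ONB_wavelet \<psi>"
    and eps_meas: "\<And>j k. \<epsilon> j k \<in> borel_measurable P"
    and Omega0_ev: "\<Omega>0 \<in> sets P" "prob_space.prob P \<Omega>0 = 1"
    and Omega0: "\<And>\<eta>. \<eta> > 0 \<Longrightarrow> \<exists>C. C \<in> borel_measurable P \<and> (\<forall>w. 0 < C w) \<and>
        (\<forall>w\<in>\<Omega>0. \<forall>j k. \<bar>\<epsilon> j k w\<bar> \<le>
           C w * (3 + \<bar>real_of_int j\<bar>) powr (1 / \<alpha> + \<eta>) * (3 + \<bar>real_of_int k\<bar>) powr (1 / \<alpha> + \<eta>))"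
    and Omega1_ev: "\<Omega>1 \<in> sets P" "prob_space.prob P \<Omega>1 = 1"
    and Omega1: "\<And>l. l > 0 \<Longrightarrow> \<exists>C'. C' \<in> borel_measurable P \<and> (\<forall>w. 0 < C' w) \<and>
        (\<forall>w\<in>\<Omega>1. \<forall>j k. 0 \<le> j \<longrightarrow> \<bar>real_of_int k\<bar> * 2 powr (- real_of_int j) \<le> l \<longrightarrow>
           \<bar>\<epsilon> j k w\<bar> \<le> C' w * 2 powr (real_of_int j / \<alpha>))"
    and omega: "\<omega> \<in> \<Omega>0 \<inter> \<Omega>1"
    and M: "0 < M"
    and ab: "1 / \<alpha> < a" "a < b" "b < 1"
  shows "bdd_above ((\<lambda>(u1, u2, v). \<bar>Xser \<alpha> \<psi> \<epsilon> u1 v \<omega> - Xser \<alpha> \<psi> \<epsilon> u2 v \<omega>\<bar> /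
                        \<bar>u1 - u2\<bar> powr (v - 1 / \<alpha>))
           ` ({-M..M} \<times> {-M..M} \<times> {a..b}))"
proof -
  obtain R0 where R0: "\<forall>x\<in>{x. \<psi> x \<noteq> 0}. norm x \<le> R0" using psi_supp bounded_iff by blast
  define R where "R = max 1 R0"
  have R1: "1 \<le> R" by (simp add: R_def)
  have suppR: "\<psi> x = 0" if "R < \<bar>x\<bar>" for x
  proof (rule ccontr)
    assume "\<psi> x \<noteq> 0" hence "\<bar>x\<bar> \<le> R0" using R0 by auto
    thus False using that by (simp add: R_def)
  qed
  have hd: "(deriv ^^ i) \<psi> differentiable (at x)" if "i < 3" for i x
    using psi_C3 that unfolding C3_def by blast
  have dif0: "\<psi> differentiable (at x)" for x using hd[of 0 x] by simp
  have dif1: "deriv \<psi> differentiable (at x)" for x using hd[of 1 x] by simp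
  have dif2: "deriv (deriv \<psi>) differentiable (at x)" for x using hd[of 2 x] by (simp add: numeral_2_eq_2)
  have d1: "(\<psi> has_real_derivative deriv \<psi> x) (at x)" for x
    using dif0 DERIV_deriv_iff_real_differentiable by blast
  have d2: "(deriv \<psi> has_real_derivative deriv (deriv \<psi>) x) (at x)" for x
    using dif1 DERIV_deriv_iff_real_differentiable by blast
  have c2: "continuous_on UNIV (deriv (deriv \<psi>))"
    using dif2 differentiable_imp_continuous_within continuous_at_imp_continuous_on by blast
  have ON: "(\<integral>x. wav \<psi> j k x * wav \<psi> j' k' x \<partial>lborel) = (if (j, k) = (j', k') then 1 else 0)" for j k j' k'
    using psi_ONB unfolding ONB_wavelet_def by blast
  have wav00: "wav \<psi> 0 0 x = \<psi> x" for x by (simp add: wav_def)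
  have nz: "\<exists>x. \<psi> x \<noteq> 0"
  proof (rule ccontr)
    assume "\<not> (\<exists>x. \<psi> x \<noteq> 0)"
    hence "(\<lambda>x. wav \<psi> 0 0 x * wav \<psi> 0 0 x) = (\<lambda>x. 0)" by (auto simp: wav00)
    thus False using ON[of 0 0 0 0] by simp
  qed
  have ortho: "(\<integral>x. \<psi> x * \<psi> (2 ^ j * x - real_of_int k) \<partial>lborel) = 0" if "1 \<le> j" for j :: nat and k
  proof -
    have e: "wav \<psi> (int j) k x * wav \<psi> 0 0 x = 2 powr (real j / 2) * (\<psi> x * \<psi> (2 ^ j * x - real_of_int k))" for x
      by (simp add: wav_def powr_realpow)
    have "0 = (\<integral>x. wav \<psi> (int j) k x * wav \<psi> 0 0 x \<partial>lborel)" using ON[of "int j" k 0 0] that by simp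
    also have "\<dots> = 2 powr (real j / 2) * (\<integral>x. \<psi> x * \<psi> (2 ^ j * x - real_of_int k) \<partial>lborel)"
      by (simp only: e integral_mult_right_zero)
    finally show ?thesis by simp
  qed
  interpret P: psiw \<psi> "deriv \<psi>" "deriv (deriv \<psi>)" R
    by unfold_locales (use R1 suppR d1 d2 c2 nz ortho in auto)
  have Psi_G: "Psi \<alpha> \<psi> x v = P.G (v - 1 / \<alpha>) x" for x v by (simp add: Psi_def P.G_def)
  have \<delta>0: "0 < (1 - b) / 2" using ab by simp
  obtain C where C: "\<forall>w. 0 < C w" "\<forall>w\<in>\<Omega>0. \<forall>j k. \<bar>\<epsilon> j k w\<bar> \<le>
      C w * (3 + \<bar>real_of_int j\<bar>) powr (1 / \<alpha> + (1 - b) / 2) * (3 + \<bar>real_of_int k\<bar>) powr (1 / \<alpha> + (1 - b) / 2)"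
    using Omega0[OF \<delta>0] by blast
  have M2: "0 < 2 * M" using M by simp
  obtain C' where C': "\<forall>w. 0 < C' w" "\<forall>w\<in>\<Omega>1. \<forall>j k. 0 \<le> j \<longrightarrow> \<bar>real_of_int k\<bar> * 2 powr (- real_of_int j) \<le> 2 * M \<longrightarrow>
           \<bar>\<epsilon> j k w\<bar> \<le> C' w * 2 powr (real_of_int j / \<alpha>)"
    using Omega1[OF M2] by blast
  have E0: "\<bar>\<epsilon> j k \<omega>\<bar> \<le> C \<omega> * (3 + \<bar>real_of_int j\<bar>) powr (1 / \<alpha> + (1 - b) / 2) * (3 + \<bar>real_of_int k\<bar>) powr (1 / \<alpha> + (1 - b) / 2)" for j k
    using C(2) omega by blast
  have E1: "\<bar>\<epsilon> j k \<omega>\<bar> \<le> C' \<omega> * 2 powr (real_of_int j / \<alpha>)"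
    if "0 \<le> j" "\<bar>real_of_int k\<bar> * 2 powr (- real_of_int j) \<le> 2 * M" for j k
    using C'(2) omega that by blast
  have Cn: "0 \<le> C \<omega>" "0 \<le> C' \<omega>" using C(1) C'(1) less_imp_le by blast+
  define K where "K = Cfin P.AA (C \<omega>) (C' \<omega>) \<alpha> a b M"
  define T where "T u1 u2 v j k = 2 powr (- real_of_int j * v) * \<epsilon> j k \<omega> *
      (Psi \<alpha> \<psi> (2 powr real_of_int j * u1 - real_of_int k) v - Psi \<alpha> \<psi> (2 powr real_of_int j * u2 - real_of_int k) v)"
    for u1 u2 v :: real and j k :: int
  have key: "(\<Sum>x\<in>F. \<bar>T u1 u2 v (fst x) (snd x)\<bar>) \<le> K * \<bar>u1 - u2\<bar> powr (v - 1 / \<alpha>)"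
    if u: "\<bar>u1\<bar> \<le> M" "\<bar>u2\<bar> \<le> M" "u1 \<noteq> u2" and v: "a \<le> v" "v \<le> b" and F: "finite F" for u1 u2 v F
  proof -
    have ia: "0 < 1 / \<alpha>" using alpha by simp
    have g: "0 < v - 1 / \<alpha>" "v - 1 / \<alpha> < 1" using ab v ia by linarith+
    show ?thesis unfolding K_def
    proof (rule total_bound[OF _ _ v _ M Cn P.AA_nonneg E0 E1 u _ F])
      fix j k
      define y1 where "y1 = 2 powr real_of_int j * u1 - real_of_int k"
      define y2 where "y2 = 2 powr real_of_int j * u2 - real_of_int k"
      have yd: "y1 - y2 = 2 powr real_of_int j * u1 - 2 powr real_of_int j * u2" by (simp add: y1_def y2_def)
      have "\<bar>T u1 u2 v j k\<bar> = 2 powr (- real_of_int j * v) * \<bar>\<epsilon> j k \<omega>\<bar> * \<bar>P.G (v - 1 / \<alpha>) y1 - P.G (v - 1 / \<alpha>) y2\<bar>"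
        by (simp add: T_def Psi_G y1_def y2_def abs_mult)
      also have "\<dots> \<le> 2 powr (- real_of_int j * v) * \<bar>\<epsilon> j k \<omega>\<bar> * (P.AA * min 1 \<bar>y1 - y2\<bar> *
          ((1 + \<bar>y1\<bar>) powr (v - 1 / \<alpha> - 2) + (1 + \<bar>y2\<bar>) powr (v - 1 / \<alpha> - 2)))"
        by (intro mult_left_mono P.G_Delta[OF g]) auto
      finally have X: "\<bar>T u1 u2 v j k\<bar> \<le> 2 powr (- real_of_int j * v) * \<bar>\<epsilon> j k \<omega>\<bar> * (P.AA * min 1 \<bar>y1 - y2\<bar> *
          ((1 + \<bar>y1\<bar>) powr (v - 1 / \<alpha> - 2) + (1 + \<bar>y2\<bar>) powr (v - 1 / \<alpha> - 2)))" .
      show "\<bar>T u1 u2 v j k\<bar> \<le> 2 powr (- real_of_int j * v) * \<bar>\<epsilon> j k \<omega>\<bar> * (P.AA * min 1 \<bar>2 powr real_of_int j * u1 - 2 powr real_of_int j * u2\<bar> *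
        ((1 + \<bar>2 powr real_of_int j * u1 - real_of_int k\<bar>) powr (v - 1 / \<alpha> - 2)
       + (1 + \<bar>2 powr real_of_int j * u2 - real_of_int k\<bar>) powr (v - 1 / \<alpha> - 2)))"
        using X[unfolded yd] unfolding y1_def y2_def .
    qed (use alpha ab in auto)
  qed
  define D where "D u v = (\<lambda>(j::int, k::int). 2 powr (- real_of_int j * v) * \<epsilon> j k \<omega> *
        (Psi \<alpha> \<psi> (2 powr real_of_int j * u - real_of_int k) v - Psi \<alpha> \<psi> (- real_of_int k) v))" for u v
  have XD: "Xser \<alpha> \<psi> \<epsilon> u v \<omega> = infsum (D u v) UNIV" for u v by (simp add: Xser_def D_def)
  have DT: "D u v x = T u 0 v (fst x) (snd x)" for u v x by (cases x) (simp add: D_def T_def)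
  have Dsum: "D u v summable_on UNIV" if "\<bar>u\<bar> \<le> M" "a \<le> v" "v \<le> b" for u v
  proof (cases "u = 0")
    case True
    hence "D u v = (\<lambda>_. 0)" by (auto simp: D_def)
    thus ?thesis by simp
  next
    case False
    show ?thesis
    proof (rule fin_bound_summable(1))
      fix F :: "(int \<times> int) set" assume "finite F"
      thus "(\<Sum>x\<in>F. \<bar>D u v x\<bar>) \<le> K * \<bar>u - 0\<bar> powr (v - 1 / \<alpha>)"
        using key[of u 0 v F] that False M by (simp add: DT)
    qed
  qed
  show ?thesis
  proof (rule bdd_aboveI[where M="max K 0"])
    fix q assume "q \<in> (\<lambda>(u1, u2, v). \<bar>Xser \<alpha> \<psi> \<epsilon> u1 v \<omega> - Xser \<alpha> \<psi> \<epsilon> u2 v \<omega>\<bar> /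
                        \<bar>u1 - u2\<bar> powr (v - 1 / \<alpha>)) ` ({-M..M} \<times> {-M..M} \<times> {a..b})"
    then obtain u1 u2 v where uv: "u1 \<in> {-M..M}" "u2 \<in> {-M..M}" "v \<in> {a..b}"
      and q: "q = \<bar>Xser \<alpha> \<psi> \<epsilon> u1 v \<omega> - Xser \<alpha> \<psi> \<epsilon> u2 v \<omega>\<bar> / \<bar>u1 - u2\<bar> powr (v - 1 / \<alpha>)" by auto
    have ub: "\<bar>u1\<bar> \<le> M" "\<bar>u2\<bar> \<le> M" "a \<le> v" "v \<le> b" using uv by auto
    show "q \<le> max K 0"
    proof (cases "u1 = u2")
      case True thus ?thesis using q by simp
    next
      case False
      have s1: "D u1 v summable_on UNIV" using Dsum ub by blast
      have s2: "D u2 v summable_on UNIV" using Dsum ub by blast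
      have "Xser \<alpha> \<psi> \<epsilon> u1 v \<omega> - Xser \<alpha> \<psi> \<epsilon> u2 v \<omega> = infsum (\<lambda>x. D u1 v x + - D u2 v x) UNIV"
      proof -
        have s2': "(\<lambda>x. - D u2 v x) summable_on UNIV" using s2 summable_on_uminus by blast
        have "infsum (\<lambda>x. D u1 v x + - D u2 v x) UNIV = infsum (D u1 v) UNIV + infsum (\<lambda>x. - D u2 v x) UNIV"
          by (rule infsum_add[OF s1 s2'])
        also have "infsum (\<lambda>x. - D u2 v x) UNIV = - infsum (D u2 v) UNIV" by (rule infsum_uminus)
        finally show ?thesis unfolding XD by simp
      qed
      also have "(\<lambda>x. D u1 v x + - D u2 v x) = (\<lambda>x. T u1 u2 v (fst x) (snd x))"
        by (rule ext) (simp add: DT T_def algebra_simps)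
      finally have eq: "Xser \<alpha> \<psi> \<epsilon> u1 v \<omega> - Xser \<alpha> \<psi> \<epsilon> u2 v \<omega> = infsum (\<lambda>x. T u1 u2 v (fst x) (snd x)) UNIV" .
      have "\<bar>infsum (\<lambda>x. T u1 u2 v (fst x) (snd x)) UNIV\<bar> \<le> K * \<bar>u1 - u2\<bar> powr (v - 1 / \<alpha>)"
        by (rule fin_bound_summable(2)) (rule key[OF ub(1,2) False ub(3,4)])
      moreover have "0 < \<bar>u1 - u2\<bar> powr (v - 1 / \<alpha>)" using False by simp
      ultimately have "q \<le> K" unfolding q eq by (simp add: divide_le_eq)
      thus ?thesis by simp
    qed
  qed
qed


end
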